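(* Let $\kappa=[2\ell-1]$ for some $\ell\in\mathbb Z$, let $t=F+\check E+\kappa K^{-1}\in\mathbf U$, and define for $a\ge0$ $$\dot t^{(2a)}=\frac{t}{[2a]!}\prod_{j=-a+1}^{a-1}\bigl(t-[2j]\bigr),\qquad \dot t^{(2a+1)}=\frac{1}{[2a+1]!}\prod_{j=-a}^{a}\bigl(t-[2j]\bigr).$$ Then for every $m\ge1$, in $\mathbf U$, $$\dot t^{(2m)}=\sum_{b=0}^{2m}\sum_{a=0}^{b}\sum_{c\ge0} q^{\binom{2c}{2}-2c-b(2m-b-2c)-a(b-a)}\,\mathfrak p^{(2m-b-2c)}(\kappa)\;\check E^{(a)}\Bigl\{\begin{matrix}h;2-m\\ c\end{matrix}\Bigr\}K^{b-2m+2c}F^{(b-a)},$$ $$\dot t^{(2m-1)}=\sum_{b=0}^{2m-1}\sum_{a=0}^{b}\sum_{c\ge0} q^{\binom{2c}{2}-b(2m-b-2c-1)-a(b-a)}\,\mathfrak p^{(2m-b-2c-1)}(\kappa)\;\check E^{(a)}\Bigl\{\begin{matrix}h;2-m\\ c\end{matrix}\Bigr\}K^{b-2m+2c+1}F^{(b-a)}.$$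
   Context: $q$ is an indeterminate, $[n]=\frac{q^n-q^{-n}}{q-q^{-1}}$ for $n\in\mathbb Z$, $[n]!=[1]\cdots[n]$, $[0]!=1$. $\mathbf U$ is the $\mathbb Q(q)$-algebra generated by $E,F,K^{\pm1}$ with relations $KK^{-1}=K^{-1}K=1$, $EF-FE=\frac{K-K^{-1}}{q-q^{-1}}$, $KE=q^2EK$, $KF=q^{-2}FK$. Put $\check E=q^{-1}EK^{-1}$, $\check E^{(n)}=\check E^n/[n]!$, $F^{(n)}=F^n/[n]!$. For $a\in\mathbb Z$, $n\in\mathbb N$: $\Bigl\{\begin{matrix}h;a\\ n\end{matrix}\Bigr\}=\prod_{i=1}^{n}\frac{q^{4a+4i-4}K^{-2}-q^2}{q^{4i}-1}$ (equal to $1$ for $n=0$). The polynomials $\mathfrak p_n(x)$ are defined by $\mathfrak p_0=1$, $\mathfrak p_n=0$ for $n<0$, $\mathfrak p_{n+1}=x\,\mathfrak p_n+q^{2-2n}[n][n-2]\,\mathfrak p_{n-1}$ ($n\ge0$); $\mathfrak p^{(n)}=\mathfrak p_n/[n]!$ for $n\ge0$ and $\mathfrak p^{(n)}=0$ for $n<0$. *)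

theory Defs
  imports Complex_Main "HOL-Computational_Algebra.Polynomial" "HOL-Computational_Algebra.Fraction_Field"
begin

type_synonym Qq = "rat poly fract"

definition qv :: Qq where "qv = Fract [:0, 1:] 1"

definition qint :: "int \<Rightarrow> Qq" where
  "qint n = (qv powi n - qv powi (- n)) / (qv - qv powi (-1))"

definition qfact :: "nat \<Rightarrow> Qq" where
  "qfact n = (\<Prod>i\<in>{1..n}. qint (int i))"

fun frakp :: "nat \<Rightarrow> Qq \<Rightarrow> Qq" where
  "frakp 0 x = 1"
| "frakp (Suc 0) x = x"
| "frakp (Suc (Suc n)) x =
     x * frakp (Suc n) x + qv powi (2 - 2 * (int n + 1)) * qint (int n + 1) * qint (int n - 1) * frakp n x"

definition frakp_div :: "int \<Rightarrow> Qq \<Rightarrow> Qq" where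
  "frakp_div n x = (if n < 0 then 0 else frakp (nat n) x / qfact (nat n))"

text \<open>A Q(q)-algebra A (ring_1 type) with structure map phi : Q(q) -> A (a unital ring
  homomorphism with central image), containing elements E, F, K, Kinv satisfying the
  defining relations of U.  Since U is the universal such algebra, an identity in the
  generators holds in U iff it holds in every such algebra.\<close>
definition U_rep :: "(Qq \<Rightarrow> 'a::ring_1) \<Rightarrow> 'a \<Rightarrow> 'a \<Rightarrow> 'a \<Rightarrow> 'a \<Rightarrow> bool" where
  "U_rep \<phi> E F K Kinv \<longleftrightarrow>
     \<phi> 1 = 1 \<and> (\<forall>x y. \<phi> (x + y) = \<phi> x + \<phi> y) \<and> (\<forall>x y. \<phi> (x * y) = \<phi> x * \<phi> y) \<and>
     (\<forall>x y. \<phi> x * y = y * \<phi> x) \<and>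
     K * Kinv = 1 \<and> Kinv * K = 1 \<and>
     E * F - F * E = \<phi> (1 / (qv - qv powi (-1))) * (K - Kinv) \<and>
     K * E = \<phi> (qv ^ 2) * E * K \<and>
     K * F = \<phi> (qv powi (-2)) * F * K"

definition Kpow :: "'a::ring_1 \<Rightarrow> 'a \<Rightarrow> int \<Rightarrow> 'a" where
  "Kpow K Kinv e = (if 0 \<le> e then K ^ nat e else Kinv ^ nat (- e))"

definition dpow :: "(Qq \<Rightarrow> 'a::ring_1) \<Rightarrow> 'a \<Rightarrow> nat \<Rightarrow> 'a" where
  "dpow \<phi> X n = \<phi> (1 / qfact n) * X ^ n"

definition Echk :: "(Qq \<Rightarrow> 'a::ring_1) \<Rightarrow> 'a \<Rightarrow> 'a \<Rightarrow> 'a" where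
  "Echk \<phi> E Kinv = \<phi> (qv powi (-1)) * E * Kinv"

fun hbr :: "(Qq \<Rightarrow> 'a::ring_1) \<Rightarrow> 'a \<Rightarrow> int \<Rightarrow> nat \<Rightarrow> 'a" where
  "hbr \<phi> Kinv a 0 = 1"
| "hbr \<phi> Kinv a (Suc n) = hbr \<phi> Kinv a n *
     ((\<phi> (qv powi (4 * a + 4 * int (Suc n) - 4)) * Kinv ^ 2 - \<phi> (qv ^ 2))
       * \<phi> (1 / (qv ^ (4 * Suc n) - 1)))"

definition tprod :: "(Qq \<Rightarrow> 'a::ring_1) \<Rightarrow> 'a \<Rightarrow> int \<Rightarrow> int \<Rightarrow> 'a" where
  "tprod \<phi> t lo hi = foldr (\<lambda>j acc. (t - \<phi> (qint (2 * j))) * acc) [lo..hi] 1"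

definition tdot :: "(Qq \<Rightarrow> 'a::ring_1) \<Rightarrow> 'a \<Rightarrow> nat \<Rightarrow> 'a" where
  "tdot \<phi> t n = (if even n
      then \<phi> (1 / qfact n) * t * tprod \<phi> t (- int (n div 2) + 1) (int (n div 2) - 1)
      else \<phi> (1 / qfact n) * tprod \<phi> t (- int (n div 2)) (int (n div 2)))"

end

theory Submission
  imports Defs "HOL-Library.Groups_Big_Fun"
begin

lemma qv_pow: "qv ^ n = Fract (monom 1 n) 1"
proof (induction n)
  case 0 then show ?case by (simp add: One_fract_def)
next
  case (Suc n) then show ?case proof -
    have "[:0,1:] * monom (1::rat) n = monom 1 (Suc n)"
      by (simp add: monom_Suc)
    then show ?case using Suc by (simp add: qv_def mult_fract)
  qed
qed

lemma qv_pow_ne1: "n > 0 \<Longrightarrow> qv ^ n \<noteq> 1"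
proof
  assume "n > 0" "qv ^ n = 1"
  then have "Fract (monom (1::rat) n) 1 = Fract 1 1" by (simp add: qv_pow One_fract_def)
  then have "monom (1::rat) n = 1" by (simp add: eq_fract)
  then have "degree (monom (1::rat) n) = 0" by simp
  with \<open>n > 0\<close> show False by (simp add: degree_monom_eq)
qed

lemma qv_nz[simp]: "qv \<noteq> 0"
  by (simp add: qv_def Zero_fract_def eq_fract)

lemma qv_powi_eq1: "qv powi k = 1 \<longleftrightarrow> k = 0"
proof
  assume h: "qv powi k = 1"
  show "k = 0"
  proof (rule ccontr)
    assume "k \<noteq> 0"
    show False
    proof (cases "k > 0")
      case True
      then have "qv ^ nat k = 1" using h by (simp add: power_int_def)
      then show False using qv_pow_ne1[of "nat k"] True by simp
    next
      case False
      with \<open>k \<noteq> 0\<close> have "qv ^ nat (-k) = 1" using h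
        by (auto simp add: power_int_def field_simps)
      then show False using qv_pow_ne1[of "nat (-k)"] False \<open>k\<noteq>0\<close> by simp
    qed
  qed
qed simp

lemma qden_nz: "qv - qv powi -1 \<noteq> 0"
proof
  assume "qv - qv powi -1 = 0"
  then have "qv * qv = qv * qv powi -1" by simp
  then have "qv powi 2 = 1" by (simp add: power_int_minus power2_eq_square)
  then show False using qv_powi_eq1[of 2] by simp
qed

lemma q2nz: "qv^2 - 1 \<noteq> 0"
  using qv_pow_ne1[of 2] by simp

lemma qden_alt: "qv - qv powi -1 = (qv^2 - 1) / qv"
  by (simp add: field_simps power2_eq_square power_int_minus)
lemma qint_alt: "qint k = (qv powi k - qv powi (-k)) * qv / (qv^2 - 1)"
  unfolding qint_def qden_alt by simp

lemma qint_0[simp]: "qint 0 = 0" by (simp add: qint_def)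
lemma qint_1[simp]: "qint 1 = 1" using qden_nz by (simp add: qint_def)
lemma qint_neg: "qint (- k) = - qint k" unfolding qint_def by (simp add: diff_divide_distrib)
lemma qint_nz: "k \<noteq> 0 \<Longrightarrow> qint k \<noteq> 0"
proof
  assume k: "k \<noteq> 0" and "qint k = 0"
  then have "qv powi k = qv powi (-k)" using q2nz by (simp add: qint_alt)
  then have "qv powi k * qv powi k = qv powi (-k) * qv powi k" by simp
  then have "qv powi k * qv powi k = 1" by (simp add: power_int_minus)
  moreover have "qv powi (k + k) = qv powi k * qv powi k" using power_int_add[of qv k k] by simp
  ultimately have "qv powi (k + k) = 1" by simp
  then have "k + k = 0" using qv_powi_eq1 by blast
  with k show False by simp
qed

lemma qfact_Suc: "qfact (Suc n) = qfact n * qint (int (Suc n))"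
  by (simp add: qfact_def prod.cl_ivl_Suc)
lemma qfact_0[simp]: "qfact 0 = 1" by (simp add: qfact_def)
lemma qfact_nz: "qfact n \<noteq> 0"
  by (induction n) (auto simp: qfact_Suc qint_nz)

definition ifct :: "int \<Rightarrow> Qq" where "ifct a = (if a < 0 then 0 else 1 / qfact (nat a))"

lemma ifct_pred: "ifct (a - 1) = qint a * ifct a"
proof (cases "a \<ge> 1")
  case True
  define n where "n = nat (a - 1)"
  have an: "a = int n + 1" "nat a = Suc n" "nat (a - 1) = n" using True by (auto simp: n_def)
  have nz: "qfact n \<noteq> 0" "qint (int n + 1) \<noteq> 0" using qfact_nz qint_nz by auto
  have q: "qfact (Suc n) = qfact n * qint a" by (simp add: qfact_Suc add.commute an(1))
  have nz2: "qint a \<noteq> 0" using nz an(1) by simp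
  have "ifct (a - 1) = 1 / qfact n" "ifct a = 1 / qfact (Suc n)" using True by (simp_all add: ifct_def an(2,3))
  then show ?thesis using nz(1) nz2 by (simp add: q)
next
  case False
  then show ?thesis by (cases "a = 0") (auto simp: ifct_def)
qed

lemma ifct_0[simp]: "ifct 0 = 1" by (simp add: ifct_def)

lemma frakp_div_rec:
  "qint (j+1) * frakp_div (j+1) k = k * frakp_div j k + qv powi (2 - 2*j) * qint (j-2) * frakp_div (j-1) k"
proof (cases "j \<ge> 1")
  case True
  define n where "n = nat (j - 1)"
  have jn: "j = int n + 1" "nat (j+1) = Suc (Suc n)" "nat j = Suc n" "nat (j - 1) = n" using True by (auto simp: n_def)
  have f: "frakp (Suc (Suc n)) k = k * frakp (Suc n) k + qv powi (2 - 2 * (int n + 1)) * qint (int n + 1) * qint (int n - 1) * frakp n k"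
    by simp
  have qs1: "qfact (Suc n) = qfact n * qint j"
    by (simp add: qfact_Suc add.commute jn(1))
  have qs: "qfact (Suc (Suc n)) = qfact n * qint j * qint (j + 1)"
    by (simp add: qfact_Suc add.commute jn(1))
  have nz: "qfact n \<noteq> 0" "qint j \<noteq> 0" "qint (j + 1) \<noteq> 0"
    using qfact_nz qint_nz True by auto
  have d: "frakp_div (j+1) k = frakp (Suc (Suc n)) k / qfact (Suc (Suc n))"
    "frakp_div j k = frakp (Suc n) k / qfact (Suc n)"
    "frakp_div (j - 1) k = frakp n k / qfact n"
    using True by (simp_all add: frakp_div_def jn(2,3,4))
  have e: "int n + 1 = j" "int n - 1 = j - 2" using jn(1) by simp_all
  show ?thesis
    unfolding d f qs qs1 e using nz by (simp add: field_simps)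
next
  case False
  then consider "j = 0" | "j = -1" | "j \<le> -2" by linarith
  then show ?thesis
  proof cases
    case 1 then show ?thesis by (simp add: frakp_div_def qfact_def)
  next
    case 2 then show ?thesis by (simp add: frakp_div_def)
  next
    case 3 then show ?thesis by (simp add: frakp_div_def)
  qed
qed

lemma qpow_mult: "qv powi x * qv powi y = qv powi (x + y)"
  by (simp add: power_int_add)
lemma qpow_mult2: "qv powi x * (qv powi y * z) = qv powi (x + y) * z"
  by (simp add: power_int_add)

locale urep =
  fixes \<phi> :: "Qq \<Rightarrow> 'a::ring_1" and E F K Kinv :: 'a
  assumes U: "U_rep \<phi> E F K Kinv"
begin

lemma ph1: "\<phi> 1 = 1" using U unfolding U_rep_def by blast
lemma ph_add: "\<phi> (x + y) = \<phi> x + \<phi> y" using U unfolding U_rep_def by blast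
lemma ph_mult: "\<phi> (x * y) = \<phi> x * \<phi> y" using U unfolding U_rep_def by blast
lemma ph_comm: "\<phi> x * y = y * \<phi> x" using U unfolding U_rep_def by blast
lemma KKi: "K * Kinv = 1" using U unfolding U_rep_def by blast
lemma KiK: "Kinv * K = 1" using U unfolding U_rep_def by blast
lemma EF0: "E * F - F * E = \<phi> (1 / (qv - qv powi (-1))) * (K - Kinv)" using U unfolding U_rep_def by blast
lemma KE0: "K * E = \<phi> (qv ^ 2) * E * K" using U unfolding U_rep_def by blast
lemma KF0: "K * F = \<phi> (qv powi (-2)) * F * K" using U unfolding U_rep_def by blast

lemma ph0: "\<phi> 0 = 0"
proof -
  have "\<phi> 0 = \<phi> 0 + \<phi> 0" using ph_add[of 0 0] by simp
  then show ?thesis by simp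
qed
lemma ph_uminus: "\<phi> (- x) = - \<phi> x"
proof -
  have "\<phi> (- x) + \<phi> x = 0" using ph_add[of "-x" x] ph0 by simp
  then show ?thesis by (simp add: eq_neg_iff_add_eq_0)
qed
lemma ph_diff: "\<phi> (x - y) = \<phi> x - \<phi> y"
  using ph_add[of x "-y"] ph_uminus[of y] by simp

definition sc :: "Qq \<Rightarrow> 'a \<Rightarrow> 'a" where "sc c x = \<phi> c * x"

lemma sc_mult_left[simp]: "sc c x * y = sc c (x * y)" by (simp add: sc_def mult.assoc)
lemma sc_mult_right[simp]: "x * sc c y = sc c (x * y)"
  unfolding sc_def by (metis mult.assoc ph_comm)
lemma sc_sc[simp]: "sc c (sc d x) = sc (c * d) x" by (simp add: sc_def ph_mult mult.assoc)
lemma sc_1[simp]: "sc 1 x = x" by (simp add: sc_def ph1)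
lemma sc_0[simp]: "sc 0 x = 0" by (simp add: sc_def ph0)
lemma sc_x0[simp]: "sc c 0 = 0" by (simp add: sc_def)
lemma sc_add: "sc c (x + y) = sc c x + sc c y" by (simp add: sc_def distrib_left)
lemma sc_diff: "sc c (x - y) = sc c x - sc c y" by (simp add: sc_def right_diff_distrib)
lemma sc_uminus: "sc c (- x) = - sc c x" by (simp add: sc_def)
lemma sc_add_left: "sc (c + d) x = sc c x + sc d x" by (simp add: sc_def ph_add distrib_right)
lemma sc_diff_left: "sc (c - d) x = sc c x - sc d x" by (simp add: sc_def ph_diff left_diff_distrib)
lemma sc_uminus_left: "sc (- c) x = - sc c x" by (simp add: sc_def ph_uminus)
lemma ph_sc: "\<phi> c = sc c 1" by (simp add: sc_def)
lemma sc_cong: "c = d \<Longrightarrow> sc c x = sc d x" by simp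

lemmas scs = sc_add sc_diff sc_uminus sc_add_left sc_diff_left sc_uminus_left

lemma KE: "K * E = sc (qv^2) (E * K)" using KE0 by (simp add: sc_def mult.assoc)
lemma KF: "K * F = sc (qv powi -2) (F * K)" using KF0 by (simp add: sc_def mult.assoc)
lemma EF: "E * F = F * E + sc (1 / (qv - qv powi (-1))) (K - Kinv)"
  using EF0 by (simp add: sc_def algebra_simps)

lemma KiE: "Kinv * E = sc (qv powi -2) (E * Kinv)"
proof -
  have "E * Kinv = Kinv * (K * E) * Kinv" by (simp add: mult.assoc[symmetric] KiK)
  also have "\<dots> = sc (qv^2) (Kinv * E)" by (simp add: KE mult.assoc KKi)
  finally have "sc (qv powi -2) (E * Kinv) = sc (qv powi -2 * qv^2) (Kinv * E)" by simp
  also have "qv powi -2 * qv^2 = 1" by (simp add: power_int_minus)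
  finally show ?thesis by simp
qed

lemma FKi: "F * Kinv = sc (qv powi -2) (Kinv * F)"
proof -
  have "F * Kinv = Kinv * (K * F) * Kinv" by (simp add: mult.assoc[symmetric] KiK)
  also have "\<dots> = sc (qv powi -2) (Kinv * F)" by (simp add: KF mult.assoc KKi)
  finally show ?thesis .
qed

lemma FK: "F * K = sc (qv^2) (K * F)"
proof -
  have "sc (qv^2) (K * F) = sc (qv^2 * qv powi -2) (F * K)" by (simp add: KF)
  also have "qv^2 * qv powi -2 = 1" by (simp add: power_int_minus)
  finally show ?thesis by simp
qed

lemma KiF: "Kinv * F = sc (qv^2) (F * Kinv)"
proof -
  have "sc (qv^2) (F * Kinv) = sc (qv^2 * qv powi -2) (Kinv * F)" by (simp add: FKi)
  also have "qv^2 * qv powi -2 = 1" by (simp add: power_int_minus)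
  finally show ?thesis by simp
qed


lemma qsq_mult: "qv ^ 2 * qv powi x = qv powi (x + 2)"
  by (simp add: power_int_add)
lemma qsq_mult': "qv powi x * qv ^ 2 = qv powi (x + 2)"
  by (simp add: power_int_add)
lemma qv_inv: "qv powi -1 * qv = 1" by (simp add: power_int_minus)

abbreviation e where "e \<equiv> Echk \<phi> E Kinv"
lemma e_def': "e = sc (qv powi -1) (E * Kinv)" by (simp add: Echk_def sc_def mult.assoc)

lemma Ke: "K * e = sc (qv^2) (e * K)"
proof -
  have "K * e = sc (qv powi -1) ((K * E) * Kinv)" by (simp add: e_def' mult.assoc)
  also have "\<dots> = sc (qv powi -1 * qv^2) (E * (K * Kinv))" by (simp add: KE mult.assoc)
  also have "\<dots> = sc qv E" by (simp add: KKi power_int_minus power2_eq_square field_simps)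
  finally have 1: "K * e = sc qv E" .
  have "sc (qv^2) (e * K) = sc (qv^2 * qv powi -1) (E * (Kinv * K))" by (simp add: e_def' mult.assoc)
  also have "\<dots> = sc qv E" by (simp add: KiK power_int_minus power2_eq_square field_simps)
  finally show ?thesis using 1 by simp
qed

lemma Kie: "Kinv * e = sc (qv powi -2) (e * Kinv)"
proof -
  have "Kinv * e = sc (qv powi -1) ((Kinv * E) * Kinv)" by (simp add: e_def' mult.assoc)
  also have "\<dots> = sc (qv powi -1 * qv powi -2) (E * Kinv * Kinv)" by (simp add: KiE mult.assoc)
  finally have 1: "Kinv * e = sc (qv powi -1 * qv powi -2) (E * Kinv * Kinv)" .
  have "sc (qv powi -2) (e * Kinv) = sc (qv powi -2 * qv powi -1) (E * Kinv * Kinv)" by (simp add: e_def' mult.assoc)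
  then show ?thesis using 1 by (simp add: mult.commute)
qed

definition X where "X = Kinv * Kinv"

lemma Fe: "F * e = sc (qv powi -2) (e * F) - sc (qv powi -1 / (qv - qv powi (-1))) (1 - X)"
proof -
  have "e * F = sc (qv powi -1) (E * (Kinv * F))" by (simp add: e_def' mult.assoc)
  also have "\<dots> = sc (qv powi -1 * qv^2) (E * F * Kinv)" by (simp add: KiF mult.assoc)
  also have "\<dots> = sc (qv powi -1 * qv^2) (F * E * Kinv) + sc (qv powi -1 * qv^2 * (1 / (qv - qv powi (-1)))) ((K - Kinv) * Kinv)"
    by (simp add: EF distrib_right sc_add)
  also have "(K - Kinv) * Kinv = 1 - X" by (simp add: X_def left_diff_distrib KKi)
  finally have 1: "e * F = sc (qv powi -1 * qv^2) (F * E * Kinv) + sc (qv powi -1 * qv^2 * (1 / (qv - qv powi (-1)))) (1 - X)" .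
  have "sc (qv powi -2) (e * F) = sc (qv powi -2 * (qv powi -1 * qv^2)) (F * E * Kinv) + sc (qv powi -2 * (qv powi -1 * qv^2 * (1 / (qv - qv powi (-1))))) (1 - X)"
    unfolding 1 by (simp add: scs)
  also have "qv powi -2 * (qv powi -1 * qv^2) = qv powi -1" by (simp add: power_int_minus power2_eq_square field_simps)
  also have "qv powi -2 * (qv powi -1 * qv^2 * (1 / (qv - qv powi (-1)))) = qv powi -1 / (qv - qv powi (-1))"
    by (simp add: power_int_minus power2_eq_square field_simps)
  also have "sc (qv powi -1) (F * E * Kinv) = F * e" by (simp add: e_def' mult.assoc)
  finally show ?thesis by simp
qed

abbreviation Kp where "Kp \<equiv> Kpow K Kinv"

lemma KiSuc: "Kinv ^ Suc n * K = Kinv ^ n" by (simp only: power_Suc2 mult.assoc KiK mult_1_right)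
lemma KSuc: "K ^ Suc n * Kinv = K ^ n" by (simp only: power_Suc2 mult.assoc KKi mult_1_right)

lemma Kp_0[simp]: "Kp 0 = 1" by (simp add: Kpow_def)
lemma Kp_Suc: "Kp (i + 1) = Kp i * K"
proof (cases "i \<ge> 0")
  case True
  then have "nat (i + 1) = Suc (nat i)" by simp
  then show ?thesis using True by (simp add: Kpow_def power_Suc2 power_commutes)
next
  case False
  show ?thesis
  proof (cases "i = -1")
    case True then show ?thesis by (simp add: Kpow_def KiK)
  next
    case False
    with \<open>\<not> i \<ge> 0\<close> have h: "nat (- i) = Suc (nat (- (i + 1)))" by simp
    have 1: "Kp i = Kinv ^ Suc (nat (- (i + 1)))" using \<open>\<not> i \<ge> 0\<close> by (simp only: Kpow_def h) simp
    have 2: "Kp (i + 1) = Kinv ^ nat (- (i + 1))" using \<open>\<not> i \<ge> 0\<close> False by (simp add: Kpow_def)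
    show ?thesis unfolding 1 2 by (rule KiSuc[symmetric])
  qed
qed
lemma Kp_pred: "Kp (i - 1) = Kp i * Kinv"
proof (cases "i \<ge> 1")
  case True
  then have h: "nat i = Suc (nat (i - 1))" by simp
  have 1: "Kp i = K ^ Suc (nat (i - 1))" using True by (simp only: Kpow_def h) simp
  have 2: "Kp (i - 1) = K ^ nat (i - 1)" using True by (simp add: Kpow_def)
  show ?thesis unfolding 1 2 by (rule KSuc[symmetric])
next
  case False
  then have "nat (1 - i) = Suc (nat (- i))" by simp
  then show ?thesis using False by (simp add: Kpow_def power_Suc2 power_commutes)
qed
lemma Kp_add: "Kp (i + j) = Kp i * Kp j"
proof (induction j rule: int_induct[of _ 0])
  case base then show ?case by simp
next
  case (step1 j)
  have "Kp (i + (j + 1)) = Kp (i + j) * K" using Kp_Suc[of "i+j"] by (simp add: add.assoc)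
  then show ?case using step1 by (simp add: Kp_Suc mult.assoc)
next
  case (step2 j)
  have "Kp (i + (j - 1)) = Kp (i + j) * Kinv" using Kp_pred[of "i+j"] by (simp add: algebra_simps)
  then show ?case using step2 by (simp add: Kp_pred mult.assoc)
qed
lemma Kp_comm: "Kp i * Kp j = Kp j * Kp i"
  by (metis Kp_add add.commute)
lemma Kp_m1: "Kp (-1) = Kinv" using Kp_pred[of 0] by simp
lemma Kp_1: "Kp 1 = K" using Kp_Suc[of 0] by simp
lemma X_Kp: "X = Kp (-2)" using Kp_add[of "-1" "-1"] by (simp add: X_def Kp_m1)

lemma Kp_e: "Kp i * e = sc (qv powi (2 * i)) (e * Kp i)"
proof (induction i rule: int_induct[of _ 0])
  case base then show ?case by simp
next
  case (step1 i)
  have "Kp (i + 1) * e = Kp i * (K * e)" by (simp add: Kp_Suc mult.assoc)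
  also have "\<dots> = sc (qv^2 * qv powi (2 * i)) (e * (Kp i * K))" by (simp add: Ke step1 mult.assoc[symmetric])
  finally show ?case by (simp add: Kp_Suc[symmetric] qsq_mult algebra_simps)
next
  case (step2 i)
  have "Kp (i - 1) * e = Kp i * (Kinv * e)" by (simp add: Kp_pred mult.assoc)
  also have "\<dots> = sc (qv powi -2 * qv powi (2 * i)) (e * (Kp i * Kinv))" by (simp add: Kie step2 mult.assoc[symmetric])
  finally show ?case by (simp add: Kp_pred[symmetric] qpow_mult algebra_simps)
qed

lemma F_Kp: "F * Kp i = sc (qv powi (2 * i)) (Kp i * F)"
proof (induction i rule: int_induct[of _ 0])
  case base then show ?case by simp
next
  case (step1 i)
  have "F * Kp (i + 1) = (F * Kp i) * K" by (simp add: Kp_Suc mult.assoc)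
  also have "\<dots> = sc (qv powi (2 * i) * qv^2) (Kp i * K * F)" by (simp add: step1 FK mult.assoc)
  finally show ?case by (simp add: Kp_Suc[symmetric] qsq_mult qsq_mult' algebra_simps)
next
  case (step2 i)
  have "F * Kp (i - 1) = (F * Kp i) * Kinv" by (simp add: Kp_pred mult.assoc)
  also have "\<dots> = sc (qv powi (2 * i) * qv powi -2) (Kp i * Kinv * F)" by (simp add: step2 FKi mult.assoc)
  finally show ?case by (simp add: Kp_pred[symmetric] qpow_mult algebra_simps)
qed

end

lemma powi_num_mult: "qv powi (numeral k * x) = (qv powi x) ^ numeral k"
  by (simp add: power_int_mult mult.commute[of "numeral k"] power_int_power'[symmetric])
lemma powi_negnum_mult: "qv powi (- numeral k * x) = inverse ((qv powi x) ^ numeral k)"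
  by (metis mult_minus_left power_int_minus powi_num_mult)
lemmas qsplit = power_int_add power_int_diff power_int_minus powi_num_mult powi_negnum_mult

definition xr :: "int \<Rightarrow> Qq" where "xr r = - (qv powi (- r)) * qint r / (qv - qv powi -1)"
definition yr :: "int \<Rightarrow> Qq" where "yr r = qv powi (2-3*r) * qint r / (qv - qv powi -1)"
definition gam :: Qq where "gam = qv powi -1 / (qv - qv powi (-1))"

lemma xr_0[simp]: "xr 0 = 0" by (simp add: xr_def)
lemma yr_0[simp]: "yr 0 = 0" by (simp add: yr_def)

lemma xr_Suc: "xr (r + 1) = xr r - gam * qv powi (-2 * r)"
proof -
  define R where "R = qv powi r"
  define W where "W = qv^2 - 1"
  have Wnz: "W \<noteq> 0" using q2nz W_def by simp
  have nz: "R \<noteq> 0" by (simp add: R_def)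
  show ?thesis
    unfolding xr_def gam_def qint_alt qden_alt W_def[symmetric]
    apply (simp add: qsplit R_def[symmetric])
    apply (simp add: field_simps nz Wnz)
    unfolding W_def
    apply algebra
    done
qed

lemma yr_Suc: "yr (r + 1) = qv powi -4 * yr r + gam * qv powi (-2 * r)"
proof -
  define R where "R = qv powi r"
  define W where "W = qv^2 - 1"
  have Wnz: "W \<noteq> 0" using q2nz W_def by simp
  have nz: "R \<noteq> 0" by (simp add: R_def)
  show ?thesis
    unfolding yr_def gam_def qint_alt qden_alt W_def[symmetric]
    apply (simp add: qsplit R_def[symmetric])
    apply (simp add: field_simps nz Wnz)
    unfolding W_def
    apply algebra
    done
qed


lemma qv4_ne1: "qv ^ (4 * Suc n) - 1 \<noteq> 0"
  using qv_pow_ne1[of "4 * Suc n"] by simp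

declare hbr.simps(2)[simp del]

fun hD :: "nat \<Rightarrow> Qq" where
  "hD 0 = 1"
| "hD (Suc n) = hD n * (qv ^ (4 * Suc n) - 1)"

lemma hD_nz: "hD n \<noteq> 0"
proof (induction n)
  case (Suc n) then show ?case using qv4_ne1[of n] by (simp del: hD.simps(2) add: hD.simps(2)[of n])
qed simp

context urep
begin

fun hN :: "int \<Rightarrow> nat \<Rightarrow> 'a" where
  "hN al 0 = 1"
| "hN al (Suc n) = hN al n * (sc (qv powi (4 * al + 4 * int (Suc n) - 4)) X - sc (qv^2) 1)"

lemma hbr_Suc': "hbr \<phi> Kinv al (Suc n) = sc (1 / (qv ^ (4 * Suc n) - 1)) (hbr \<phi> Kinv al n * (sc (qv powi (4 * al + 4 * int (Suc n) - 4)) X - sc (qv^2) 1))"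
proof -
  let ?x = "qv powi (4 * al + 4 * int (Suc n) - 4)"
  let ?d = "1 / (qv ^ (4 * Suc n) - 1)"
  have 1: "(\<phi> ?x * (Kinv * Kinv) - \<phi> (qv^2)) * \<phi> ?d = sc ?d (sc ?x X - sc (qv^2) 1)"
    unfolding sc_def X_def using ph_comm[of ?d "\<phi> ?x * (Kinv * Kinv) - \<phi> (qv^2)"] by simp
  show ?thesis by (simp only: hbr.simps power2_eq_square[of Kinv] 1 sc_mult_right)
qed

lemma hbr_N: "hbr \<phi> Kinv al n = sc (1 / hD n) (hN al n)"
proof (induction n)
  case 0 then show ?case by simp
next
  case (Suc n)
  show ?case unfolding hbr_Suc' Suc by (simp add: mult.commute)
qed

lemma X_comm_f: "(sc a X - sc b 1) * X = X * (sc a X - sc b 1)"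
  by (simp add: left_diff_distrib right_diff_distrib)

lemma hN_X: "hN al n * X = X * hN al n"
proof (induction n)
  case 0 then show ?case by simp
next
  case (Suc n)
  have "hN al (Suc n) * X = hN al n * ((sc (qv powi (4 * al + 4 * int (Suc n) - 4)) X - sc (qv^2) 1) * X)"
    by (simp add: mult.assoc)
  also have "\<dots> = (hN al n * X) * (sc (qv powi (4 * al + 4 * int (Suc n) - 4)) X - sc (qv^2) 1)"
    by (simp only: X_comm_f mult.assoc)
  also have "\<dots> = X * hN al (Suc n)" by (simp only: Suc mult.assoc hN.simps)
  finally show ?case .
qed

lemma hN_f: "hN al n * (sc a X - sc b 1) = (sc a X - sc b 1) * hN al n"
  by (simp add: left_diff_distrib right_diff_distrib hN_X)

lemma hN_shift: "hN (al - 1) (Suc c) = (sc (qv powi (4 * al - 4)) X - sc (qv^2) 1) * hN al c"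
proof (induction c)
  case 0 then show ?case by (simp add: algebra_simps)
next
  case (Suc c)
  have ex: "4 * (al - 1) + 4 * int (Suc (Suc c)) - 4 = 4 * al + 4 * int (Suc c) - 4" by simp
  have "hN (al - 1) (Suc (Suc c)) = hN (al - 1) (Suc c) * (sc (qv powi (4 * (al - 1) + 4 * int (Suc (Suc c)) - 4)) X - sc (qv^2) 1)"
    by (simp only: hN.simps)
  also have "\<dots> = ((sc (qv powi (4 * al - 4)) X - sc (qv^2) 1) * hN al c) * (sc (qv powi (4 * al + 4 * int (Suc c) - 4)) X - sc (qv^2) 1)"
    by (simp only: Suc ex)
  also have "\<dots> = (sc (qv powi (4 * al - 4)) X - sc (qv^2) 1) * hN al (Suc c)"
    by (simp only: hN.simps(2)[of al c] mult.assoc)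
  finally show ?case .
qed

lemma hbr_shift: "hbr \<phi> Kinv (al - 1) (Suc c) = hbr \<phi> Kinv al (Suc c) - sc (qv powi (4 * al - 4)) (X * hbr \<phi> Kinv al c)"
proof -
  let ?f0 = "sc (qv powi (4 * al - 4)) X - sc (qv^2) 1"
  let ?f1 = "sc (qv powi (4 * al + 4 * int (Suc c) - 4)) X - sc (qv^2) 1"
  have a1: "hbr \<phi> Kinv (al - 1) (Suc c) = sc (1 / hD (Suc c)) (hN al c * ?f0)"
    by (simp only: hbr_N hN_shift hN_f)
  have a2: "hbr \<phi> Kinv al (Suc c) = sc (1 / hD (Suc c)) (hN al c * ?f1)"
    by (simp only: hbr_N hN.simps(2))
  have "hbr \<phi> Kinv (al - 1) (Suc c) - hbr \<phi> Kinv al (Suc c) = sc (1 / hD (Suc c)) (hN al c * (?f0 - ?f1))"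
    unfolding a1 a2 by (simp only: sc_diff right_diff_distrib)
  also have "?f0 - ?f1 = sc (qv powi (4 * al - 4) - qv powi (4 * al + 4 * int (Suc c) - 4)) X"
    by (simp add: sc_diff_left)
  also have "sc (1 / hD (Suc c)) (hN al c * sc (qv powi (4 * al - 4) - qv powi (4 * al + 4 * int (Suc c) - 4)) X)
      = sc ((qv powi (4 * al - 4) - qv powi (4 * al + 4 * int (Suc c) - 4)) / hD (Suc c)) (hN al c * X)"
    by simp
  also have "(qv powi (4 * al - 4) - qv powi (4 * al + 4 * int (Suc c) - 4)) / hD (Suc c) = - (qv powi (4 * al - 4)) * (1 / hD c)"
  proof -
    have "qv powi (4 * al + 4 * int (Suc c) - 4) = qv powi (4 * al - 4) * qv ^ (4 * Suc c)"
      by (simp add: power_int_add[symmetric] power_int_of_nat[symmetric] algebra_simps)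
    then show ?thesis using hD_nz[of c] qv4_ne1[of c] by (simp add: field_simps)
  qed
  finally have "hbr \<phi> Kinv (al - 1) (Suc c) - hbr \<phi> Kinv al (Suc c) = - sc (qv powi (4 * al - 4)) (X * hbr \<phi> Kinv al c)"
    by (simp add: hbr_N hN_X sc_uminus_left mult.commute)
  then show ?thesis by (simp add: algebra_simps)
qed


lemma hbr_X: "hbr \<phi> Kinv al c * X = X * hbr \<phi> Kinv al c"
  by (simp add: hbr_N hN_X)

lemma Kp_f: "(sc a X - sc b 1) * Kp j = Kp j * (sc a X - sc b 1)"
  by (simp add: left_diff_distrib right_diff_distrib X_Kp Kp_comm)

lemma hN_Kp: "hN al n * Kp j = Kp j * hN al n"
proof (induction n)
  case 0 then show ?case by simp
next
  case (Suc n)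
  show ?case by (simp only: hN.simps mult.assoc Kp_f) (simp only: Suc mult.assoc[symmetric])
qed

lemma hbr_Kp: "hbr \<phi> Kinv al c * Kp j = Kp j * hbr \<phi> Kinv al c"
  by (simp add: hbr_N hN_Kp)

lemma X_e: "X * e = sc (qv powi -4) (e * X)"
  using Kp_e[of "-2"] by (simp add: X_Kp)

lemma f_e: "(sc a X - sc b 1) * e = e * (sc (a * qv powi -4) X - sc b 1)"
  by (simp add: left_diff_distrib right_diff_distrib X_e sc_diff mult.commute)

lemma hN_e: "hN al n * e = e * hN (al - 1) n"
proof (induction n)
  case 0 then show ?case by simp
next
  case (Suc n)
  have ex: "qv powi (4 * al + 4 * int (Suc n) - 4) * qv powi -4 = qv powi (4 * (al - 1) + 4 * int (Suc n) - 4)"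
    by (simp add: qpow_mult algebra_simps)
  show ?case by (simp only: hN.simps mult.assoc f_e ex) (simp only: Suc mult.assoc[symmetric])
qed

lemma hbr_e: "hbr \<phi> Kinv al c * e = e * hbr \<phi> Kinv (al - 1) c"
  by (simp add: hbr_N hN_e)

lemma hbr_up: "hbr \<phi> Kinv al c = sc (qv powi (4 * al + 4 * int c - 2)) (hbr \<phi> Kinv al c * X)
   - sc (qv powi -2 * (qv powi (4 * int c + 4) - 1)) (hbr \<phi> Kinv al (Suc c))"
proof -
  let ?x = "qv powi (4 * al + 4 * int (Suc c) - 4)"
  let ?d = "1 / (qv ^ (4 * Suc c) - 1)"
  have dd: "(qv powi (4 * int c + 4) - 1) * ?d = 1"
  proof -
    have "qv powi (4 * int c + 4) = qv ^ (4 * Suc c)" by (simp add: power_int_of_nat[symmetric] algebra_simps)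
    then show ?thesis using qv4_ne1[of c] by simp
  qed
  let ?k = "qv powi -2 * (qv powi (4 * int c + 4) - 1) * ?d"
  have s1: "?k * ?x = qv powi (4 * al + 4 * int c - 2)"
  proof -
    have "?k * ?x = qv powi -2 * ((qv powi (4 * int c + 4) - 1) * ?d) * ?x" by (simp only: mult.assoc)
    also have "\<dots> = qv powi -2 * ?x" by (simp only: dd mult_1_right)
    also have "\<dots> = qv powi (4 * al + 4 * int c - 2)" by (simp add: qpow_mult algebra_simps)
    finally show ?thesis .
  qed
  have s2: "?k * qv^2 = 1"
  proof -
    have "?k * qv^2 = qv powi -2 * ((qv powi (4 * int c + 4) - 1) * ?d) * qv^2" by (simp only: mult.assoc)
    also have "\<dots> = 1" by (simp only: dd mult_1_right) (simp add: power_int_minus)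
    finally show ?thesis .
  qed
  have "sc (qv powi -2 * (qv powi (4 * int c + 4) - 1)) (hbr \<phi> Kinv al (Suc c))
      = sc ?k (hbr \<phi> Kinv al c * (sc ?x X - sc (qv^2) 1))"
    by (simp only: hbr_Suc' sc_sc)
  also have "\<dots> = sc (?k * ?x) (hbr \<phi> Kinv al c * X) - sc (?k * qv^2) (hbr \<phi> Kinv al c)"
    by (simp only: right_diff_distrib sc_diff sc_mult_right sc_sc mult_1_right)
  also have "\<dots> = sc (qv powi (4 * al + 4 * int c - 2)) (hbr \<phi> Kinv al c * X) - hbr \<phi> Kinv al c"
    by (simp only: s1 s2 sc_1)
  finally show ?thesis by simp
qed

lemma F_X: "F * X = sc (qv powi -4) (X * F)"
  using F_Kp[of "-2"] by (simp add: X_Kp)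

lemma Fpow_e: "F ^ r * e = sc (qv powi (-2 * int r)) (e * F ^ r) + sc (xr (int r)) (F ^ (r - 1)) + sc (yr (int r)) (X * F ^ (r - 1))"
proof (induction r)
  case 0 then show ?case by simp
next
  case (Suc r)
  have "F ^ Suc r * e = F * (F ^ r * e)" by (simp add: mult.assoc)
  also have "\<dots> = sc (qv powi (-2 * int r)) ((F * e) * F ^ r) + sc (xr (int r)) (F * F ^ (r - 1)) + sc (yr (int r)) ((F * X) * F ^ (r - 1))"
    by (simp add: Suc distrib_left mult.assoc)
  also have "\<dots> = sc (qv powi (-2 * int r) * qv powi -2) (e * F ^ Suc r) - sc (qv powi (-2 * int r) * gam) (F ^ r)
      + sc (qv powi (-2 * int r) * gam) (X * F ^ r) + sc (xr (int r)) (F * F ^ (r - 1)) + sc (yr (int r) * qv powi -4) (X * (F * F ^ (r - 1)))"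
    by (simp add: Fe F_X gam_def left_diff_distrib sc_diff mult.assoc)
  also have "\<dots> = sc (qv powi (-2 * int (Suc r))) (e * F ^ Suc r) + sc (xr (int (Suc r))) (F ^ r) + sc (yr (int (Suc r))) (X * F ^ r)"
  proof (cases r)
    case 0 then show ?thesis using xr_Suc[of 0] yr_Suc[of 0] by (simp add: scs qpow_mult)
  next
    case (Suc r')
    then have "F * F ^ (r - 1) = F ^ r" by simp
    have x1: "xr (int (Suc r)) = xr (int r) - gam * qv powi (-2 * int r)" using xr_Suc[of "int r"] by (simp add: add.commute)
    have y1: "yr (int (Suc r)) = qv powi -4 * yr (int r) + gam * qv powi (-2 * int r)" using yr_Suc[of "int r"] by (simp add: add.commute)
    show ?thesis unfolding x1 y1 \<open>F * F ^ (r - 1) = F ^ r\<close> by (simp add: scs qpow_mult algebra_simps)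
  qed
  finally show ?case by simp
qed

end

definition sh :: "int \<times> int \<times> int \<Rightarrow> int \<times> int \<times> int \<Rightarrow> int \<times> int \<times> int" where
  "sh d x = (fst d + fst x, fst (snd d) + fst (snd x), snd (snd d) + snd (snd x))"

lemma sh_simp[simp]: "sh (da, dc, dr) (a, c, r) = (a + da, c + dc, r + dr)" by (simp add: sh_def add.commute)

definition Lt :: "int \<Rightarrow> int \<Rightarrow> Qq \<Rightarrow> ((int \<times> int \<times> int \<Rightarrow> Qq) \<times> (int \<times> int \<times> int)) list" where
  "Lt al N k = [
     (\<lambda>_. 1, (0, 0, 1)),
     (\<lambda>(a, c, r). k * qv powi (-2 * r), (0, 0, 0)),
     (\<lambda>(a, c, r). qv powi (2 * (a + r - N + 2 * c) - 2 * r), (1, 0, 0)),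
     (\<lambda>(a, c, r). if c = 0 then 0 else - (qv powi (4 * al - 4) * qv powi (2 * (a + r - N + 2 * c) - 2 * r)), (1, -1, 0)),
     (\<lambda>(a, c, r). xr r * qv powi (4 * al + 4 * c - 2), (0, 0, -1)),
     (\<lambda>(a, c, r). - (xr r * (qv powi -2 * (qv powi (4 * c + 4) - 1))), (0, 1, -1)),
     (\<lambda>(a, c, r). yr r, (0, 0, -1))]"

definition Lsh :: "int \<Rightarrow> ((int \<times> int \<times> int \<Rightarrow> Qq) \<times> (int \<times> int \<times> int)) list" where
  "Lsh al = [
     (\<lambda>(a, c, r). qv powi (4 * al + 4 * c - 2), (0, 0, 0)),
     (\<lambda>(a, c, r). - (qv powi -2 * (qv powi (4 * c + 4) - 1)), (0, 1, 0))]"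

definition Lconv :: "int \<Rightarrow> ((int \<times> int \<times> int \<Rightarrow> Qq) \<times> (int \<times> int \<times> int)) list" where
  "Lconv al = [
     (\<lambda>_. 1, (0, 0, 0)),
     (\<lambda>(a, c, r). if c = 0 then 0 else - (qv powi (4 * al - 4)), (0, -1, 0))]"

context urep
begin

lemma Fpow_Ki: "F ^ n * Kinv = sc (qv powi (-2 * int n)) (Kinv * F ^ n)"
proof (induction n)
  case 0 then show ?case by simp
next
  case (Suc n)
  have "F ^ Suc n * Kinv = F * (F ^ n * Kinv)" by (simp add: mult.assoc)
  also have "\<dots> = sc (qv powi (-2 * int n) * qv powi -2) (Kinv * F ^ Suc n)"
    by (simp add: Suc FKi mult.assoc[symmetric])
  finally show ?case by (simp add: qpow_mult algebra_simps)
qed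

definition Bb :: "int \<Rightarrow> int \<Rightarrow> int \<times> int \<times> int \<Rightarrow> 'a" where
  "Bb al N x = (case x of (a, c, r) \<Rightarrow> e ^ nat a * hbr \<phi> Kinv al (nat c) * Kp (a + r - N + 2 * c) * F ^ nat r)"

lemma BF: assumes "0 \<le> r" shows "Bb al N (a, c, r) * F = Bb al (N + 1) (a, c, r + 1)"
proof -
  have "nat (r + 1) = Suc (nat r)" using assms by simp
  then show ?thesis by (simp add: Bb_def mult.assoc power_commutes algebra_simps)
qed

lemma BKi: "Bb al N (a, c, r) * Kinv = sc (qv powi (-2 * r)) (Bb al (N + 1) (a, c, r))"
  if "0 \<le> r"
proof -
  have "Bb al N (a, c, r) * Kinv = sc (qv powi (-2 * int (nat r))) (e ^ nat a * hbr \<phi> Kinv al (nat c) * (Kp (a + r - N + 2 * c) * Kinv) * F ^ nat r)"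
    by (simp add: Bb_def mult.assoc Fpow_Ki)
  also have "Kp (a + r - N + 2 * c) * Kinv = Kp (a + r - (N + 1) + 2 * c)"
    using Kp_pred[of "a + r - N + 2 * c"] by (simp add: algebra_simps)
  finally show ?thesis using that by (simp add: Bb_def)
qed

lemma Kp_X: "Kp s * X = Kp (s - 2)"
  using Kp_add[of s "-2"] by (simp add: X_Kp)

lemma Be: assumes "0 \<le> a" "0 \<le> c" "0 \<le> r"
  shows "Bb al N (a, c, r) * e =
    sc (qv powi (2 * (a + r - N + 2 * c) - 2 * r)) (Bb al (N + 1) (a + 1, c, r))
  + sc (if c = 0 then 0 else - (qv powi (4 * al - 4) * qv powi (2 * (a + r - N + 2 * c) - 2 * r))) (Bb al (N + 1) (a + 1, c - 1, r))
  + sc (xr r * qv powi (4 * al + 4 * c - 2)) (Bb al (N + 1) (a, c, r - 1))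
  + sc (- (xr r * (qv powi -2 * (qv powi (4 * c + 4) - 1)))) (Bb al (N + 1) (a, c + 1, r - 1))
  + sc (yr r) (Bb al (N + 1) (a, c, r - 1))"
proof -
  define s where "s = a + r - N + 2 * c"
  define ea where "ea = e ^ nat a"
  define hc where "hc = hbr \<phi> Kinv al (nat c)"
  have Bdef: "Bb al N (a, c, r) = ea * hc * Kp s * F ^ nat r" by (simp add: Bb_def s_def ea_def hc_def)
  have rr: "int (nat r) = r" using assms by simp
  have "Bb al N (a, c, r) * e = ea * hc * Kp s * (F ^ nat r * e)" by (simp add: Bdef mult.assoc)
  also have "\<dots> = sc (qv powi (-2 * r)) (ea * hc * (Kp s * e) * F ^ nat r)
     + sc (xr r) (ea * hc * Kp s * F ^ (nat r - 1)) + sc (yr r) (ea * hc * Kp s * X * F ^ (nat r - 1))"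
    using assms by (simp add: Fpow_e distrib_left mult.assoc rr)
  finally have 1: "Bb al N (a, c, r) * e = sc (qv powi (-2 * r)) (ea * hc * (Kp s * e) * F ^ nat r)
     + sc (xr r) (ea * hc * Kp s * F ^ (nat r - 1)) + sc (yr r) (ea * hc * Kp s * X * F ^ (nat r - 1))" .
  have p1: "sc (qv powi (-2 * r)) (ea * hc * (Kp s * e) * F ^ nat r) =
      sc (qv powi (2 * s - 2 * r)) (Bb al (N + 1) (a + 1, c, r))
    + sc (if c = 0 then 0 else - (qv powi (4 * al - 4) * qv powi (2 * s - 2 * r))) (Bb al (N + 1) (a + 1, c - 1, r))"
  proof -
    have "ea * hc * (Kp s * e) * F ^ nat r = sc (qv powi (2 * s)) (ea * (hc * e) * Kp s * F ^ nat r)"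
      by (simp add: Kp_e mult.assoc)
    also have "ea * (hc * e) = e ^ nat (a + 1) * hbr \<phi> Kinv (al - 1) (nat c)"
      using assms by (simp add: hc_def ea_def hbr_e mult.assoc[symmetric] power_commutes nat_add_distrib)
    finally have 2: "sc (qv powi (-2 * r)) (ea * hc * (Kp s * e) * F ^ nat r) =
        sc (qv powi (2 * s - 2 * r)) (e ^ nat (a + 1) * hbr \<phi> Kinv (al - 1) (nat c) * Kp s * F ^ nat r)"
      by (simp add: qpow_mult algebra_simps)
    have sB: "a + 1 + r - (N + 1) + 2 * c = s" by (simp add: s_def)
    show ?thesis
    proof (cases "c = 0")
      case True
      then show ?thesis unfolding 2 by (simp add: Bb_def sB[symmetric] hbr.simps)
    next
      case False
      then have cc: "nat c = Suc (nat (c - 1))" using assms by simp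
      have b1: "Bb al (N + 1) (a + 1, c, r) = e ^ nat (a + 1) * hbr \<phi> Kinv al (Suc (nat (c - 1))) * Kp s * F ^ nat r"
        by (simp add: Bb_def s_def cc algebra_simps)
      have b2: "Bb al (N + 1) (a + 1, c - 1, r) = e ^ nat (a + 1) * hbr \<phi> Kinv al (nat (c - 1)) * Kp (s - 2) * F ^ nat r"
        by (simp add: Bb_def s_def algebra_simps)
      have xk: "X * Kp s = Kp (s - 2)" using Kp_X[of s] by (simp add: X_Kp Kp_comm)
      have eq: "e ^ nat (a + 1) * hbr \<phi> Kinv (al - 1) (nat c) * Kp s * F ^ nat r
          = Bb al (N + 1) (a + 1, c, r) - sc (qv powi (4 * al - 4)) (Bb al (N + 1) (a + 1, c - 1, r))"
        unfolding b1 b2 cc hbr_shift xk[symmetric] by (simp add: left_diff_distrib right_diff_distrib hbr_X[symmetric] mult.assoc)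
      show ?thesis unfolding 2 eq using False
        by (simp add: sc_diff qpow_mult sc_uminus_left algebra_simps)
    qed
  qed
  have p23: "sc (xr r) (ea * hc * Kp s * F ^ (nat r - 1)) + sc (yr r) (ea * hc * Kp s * X * F ^ (nat r - 1)) =
      sc (xr r * qv powi (4 * al + 4 * c - 2)) (Bb al (N + 1) (a, c, r - 1))
    + sc (- (xr r * (qv powi -2 * (qv powi (4 * c + 4) - 1)))) (Bb al (N + 1) (a, c + 1, r - 1))
    + sc (yr r) (Bb al (N + 1) (a, c, r - 1))"
  proof (cases "r = 0")
    case True then show ?thesis by simp
  next
    case False
    then have rn: "nat (r - 1) = nat r - 1" by simp
    have sB: "a + (r - 1) - (N + 1) + 2 * c = s - 2" "a + (r - 1) - (N + 1) + 2 * (c + 1) = s" by (simp_all add: s_def)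
    have cc: "nat (c + 1) = Suc (nat c)" "nat (1 + c) = Suc (nat c)" using assms by simp_all
    have X3: "Bb al (N + 1) (a, c, r - 1) = ea * hc * (Kp s * X) * F ^ (nat r - 1)"
      by (simp add: Bb_def s_def rn ea_def hc_def Kp_X algebra_simps)
    have X4: "Bb al (N + 1) (a, c + 1, r - 1) = ea * hbr \<phi> Kinv al (Suc (nat c)) * Kp s * F ^ (nat r - 1)"
      by (simp add: Bb_def s_def rn ea_def cc algebra_simps)
    have hup: "hc = sc (qv powi (4 * al + 4 * c - 2)) (hc * X) - sc (qv powi -2 * (qv powi (4 * c + 4) - 1)) (hbr \<phi> Kinv al (Suc (nat c)))"
      using hbr_up[of al "nat c"] assms by (simp add: hc_def)
    have "ea * hc * Kp s * F ^ (nat r - 1) = sc (qv powi (4 * al + 4 * c - 2)) (ea * hc * (X * Kp s) * F ^ (nat r - 1))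
         - sc (qv powi -2 * (qv powi (4 * c + 4) - 1)) (ea * hbr \<phi> Kinv al (Suc (nat c)) * Kp s * F ^ (nat r - 1))"
      by (subst hup) (simp add: left_diff_distrib right_diff_distrib sc_diff mult.assoc)
    also have "X * Kp s = Kp s * X" by (simp add: X_Kp Kp_comm)
    finally have h2: "ea * hc * Kp s * F ^ (nat r - 1) = sc (qv powi (4 * al + 4 * c - 2)) (Bb al (N + 1) (a, c, r - 1))
         - sc (qv powi -2 * (qv powi (4 * c + 4) - 1)) (Bb al (N + 1) (a, c + 1, r - 1))"
      unfolding X3 X4 .
    have h3: "ea * hc * Kp s * X * F ^ (nat r - 1) = Bb al (N + 1) (a, c, r - 1)"
      unfolding X3 by (simp add: mult.assoc)
    show ?thesis unfolding h2 h3 by (simp add: sc_diff sc_uminus_left)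
  qed
  have "Bb al N (a, c, r) * e = sc (qv powi (-2 * r)) (ea * hc * (Kp s * e) * F ^ nat r)
     + (sc (xr r) (ea * hc * Kp s * F ^ (nat r - 1)) + sc (yr r) (ea * hc * Kp s * X * F ^ (nat r - 1)))"
    by (simp only: 1 add.assoc)
  also have "\<dots> = (sc (qv powi (2 * s - 2 * r)) (Bb al (N + 1) (a + 1, c, r))
    + sc (if c = 0 then 0 else - (qv powi (4 * al - 4) * qv powi (2 * s - 2 * r))) (Bb al (N + 1) (a + 1, c - 1, r)))
    + (sc (xr r * qv powi (4 * al + 4 * c - 2)) (Bb al (N + 1) (a, c, r - 1))
    + sc (- (xr r * (qv powi -2 * (qv powi (4 * c + 4) - 1)))) (Bb al (N + 1) (a, c + 1, r - 1))
    + sc (yr r) (Bb al (N + 1) (a, c, r - 1)))"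
    by (simp only: p1 p23)
  finally show ?thesis by (simp only: s_def add.assoc)
qed


lemma Bt: assumes "0 \<le> a" "0 \<le> c" "0 \<le> r"
  shows "Bb al N (a, c, r) * (F + e + \<phi> k * Kinv) = (\<Sum>(f, d)\<leftarrow>Lt al N k. sc (f (a, c, r)) (Bb al (N + 1) (sh d (a, c, r))))"
proof -
  have "Bb al N (a, c, r) * (F + e + \<phi> k * Kinv) = Bb al N (a, c, r) * F + Bb al N (a, c, r) * e + sc k (Bb al N (a, c, r) * Kinv)"
    by (simp add: distrib_left ph_sc)
  also have "\<dots> = (\<Sum>(f, d)\<leftarrow>Lt al N k. sc (f (a, c, r)) (Bb al (N + 1) (sh d (a, c, r))))"
    using assms by (simp add: BF Be BKi Lt_def add.assoc add.left_commute)
  finally show ?thesis .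
qed

lemma Bsh: assumes "0 \<le> a" "0 \<le> c" "0 \<le> r"
  shows "Bb al N (a, c, r) = (\<Sum>(f, d)\<leftarrow>Lsh al. sc (f (a, c, r)) (Bb al (N + 2) (sh d (a, c, r))))"
proof -
  define s where "s = a + r - N + 2 * c"
  have hup: "hbr \<phi> Kinv al (nat c) = sc (qv powi (4 * al + 4 * c - 2)) (hbr \<phi> Kinv al (nat c) * X) - sc (qv powi -2 * (qv powi (4 * c + 4) - 1)) (hbr \<phi> Kinv al (Suc (nat c)))"
    using hbr_up[of al "nat c"] assms by simp
  have cc: "nat (c + 1) = Suc (nat c)" "nat (1 + c) = Suc (nat c)" using assms by simp_all
  have b1: "Bb al (N + 2) (a, c, r) = e ^ nat a * hbr \<phi> Kinv al (nat c) * (Kp s * X) * F ^ nat r"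
    by (simp add: Bb_def s_def Kp_X algebra_simps)
  have b2: "Bb al (N + 2) (a, c + 1, r) = e ^ nat a * hbr \<phi> Kinv al (Suc (nat c)) * Kp s * F ^ nat r"
    by (simp add: Bb_def s_def cc algebra_simps)
  have "Bb al N (a, c, r) = e ^ nat a * hbr \<phi> Kinv al (nat c) * Kp s * F ^ nat r" by (simp add: Bb_def s_def)
  also have "\<dots> = sc (qv powi (4 * al + 4 * c - 2)) (Bb al (N + 2) (a, c, r)) - sc (qv powi -2 * (qv powi (4 * c + 4) - 1)) (Bb al (N + 2) (a, c + 1, r))"
    unfolding b1 b2 by (subst hup) (simp add: left_diff_distrib right_diff_distrib sc_diff mult.assoc hbr_X[symmetric] X_Kp Kp_comm)
  finally show ?thesis by (simp add: Lsh_def sc_uminus_left)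
qed

lemma Bconv: assumes "0 \<le> a" "0 \<le> c" "0 \<le> r"
  shows "Bb (al - 1) N (a, c, r) = (\<Sum>(f, d)\<leftarrow>Lconv al. sc (f (a, c, r)) (Bb al N (sh d (a, c, r))))"
proof (cases "c = 0")
  case True then show ?thesis by (simp add: Lconv_def Bb_def hbr.simps)
next
  case False
  define s where "s = a + r - N + 2 * c"
  have cc: "nat c = Suc (nat (c - 1))" using assms False by simp
  have b2: "Bb al N (a, c - 1, r) = e ^ nat a * hbr \<phi> Kinv al (nat (c - 1)) * (X * Kp s) * F ^ nat r"
    by (simp add: Bb_def s_def X_Kp Kp_add[symmetric] algebra_simps)
  have "Bb (al - 1) N (a, c, r) = Bb al N (a, c, r) - sc (qv powi (4 * al - 4)) (Bb al N (a, c - 1, r))"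
    unfolding b2 by (simp add: Bb_def s_def cc hbr_shift left_diff_distrib right_diff_distrib hbr_X[symmetric] mult.assoc)
  then show ?thesis using False by (simp add: Lconv_def sc_uminus_left)
qed

end

definition ng :: "int \<times> int \<times> int \<Rightarrow> int \<times> int \<times> int" where
  "ng d = (- fst d, - fst (snd d), - snd (snd d))"

lemma sh_ng[simp]: "sh (ng d) (sh d x) = x" "sh d (sh (ng d) x) = x"
  by (simp_all add: sh_def ng_def)

lemma bij_sh: "bij (sh d)"
  by (rule o_bij[of "sh (ng d)"]) (auto simp: fun_eq_iff)

definition fsupp :: "(int \<times> int \<times> int \<Rightarrow> Qq) \<Rightarrow> bool" where
  "fsupp D \<longleftrightarrow> finite {x. D x \<noteq> 0}"

lemma Sum_any_shift: "Sum_any (G :: int \<times> int \<times> int \<Rightarrow> 'b::comm_monoid_add) = Sum_any (\<lambda>y. G (sh d y))"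
  by (rule Sum_any.reindex_cong[OF bij_sh]) (simp add: comp_def)

lemma fsupp_shift: "fsupp D \<Longrightarrow> fsupp (\<lambda>y. f y * D (sh d y))"
proof -
  assume "fsupp D"
  then have "finite (sh (ng d) ` {x. D x \<noteq> 0})" by (simp add: fsupp_def)
  moreover have "{y. f y * D (sh d y) \<noteq> 0} \<subseteq> sh (ng d) ` {x. D x \<noteq> 0}"
    by (auto intro!: image_eqI[of _ _ "sh d _"])
  ultimately show ?thesis unfolding fsupp_def by (rule finite_subset[rotated])
qed

lemma fsupp_add: "fsupp D1 \<Longrightarrow> fsupp D2 \<Longrightarrow> fsupp (\<lambda>x. D1 x + D2 x)"
  unfolding fsupp_def by (rule finite_subset[of _ "{x. D1 x \<noteq> 0} \<union> {x. D2 x \<noteq> 0}"]) auto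

lemma fsupp_scale: "fsupp D \<Longrightarrow> fsupp (\<lambda>x. k * D x)"
  unfolding fsupp_def by (rule finite_subset[of _ "{x. D x \<noteq> 0}"]) auto

lemma fsupp_0: "fsupp (\<lambda>x. 0)" by (simp add: fsupp_def)

lemma fsupp_trans: "fsupp D \<Longrightarrow> fsupp (\<lambda>y. \<Sum>(f, d)\<leftarrow>L. f (sh (ng d) y) * D (sh (ng d) y))"
proof (induction L)
  case Nil then show ?case by (simp add: fsupp_0)
next
  case (Cons p L)
  obtain f d where p: "p = (f, d)" by (cases p)
  show ?case using Cons fsupp_add[OF fsupp_shift[OF Cons.prems, of "\<lambda>y. f (sh (ng d) y)" "ng d"] Cons.IH]
    by (simp add: p)
qed

context urep
begin

definition Lin :: "(int \<times> int \<times> int \<Rightarrow> 'a) \<Rightarrow> (int \<times> int \<times> int \<Rightarrow> Qq) \<Rightarrow> 'a" where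
  "Lin B D = Sum_any (\<lambda>x. sc (D x) (B x))"

lemma Lin_expand: "finite S \<Longrightarrow> {x. D x \<noteq> 0} \<subseteq> S \<Longrightarrow> Lin B D = (\<Sum>x\<in>S. sc (D x) (B x))"
  unfolding Lin_def by (rule Sum_any.expand_superset) auto

lemma Lin_mult_right: "fsupp D \<Longrightarrow> Lin B D * z = Lin (\<lambda>x. B x * z) D"
  unfolding fsupp_def by (simp add: Lin_expand[OF _ order_refl] sum_distrib_right)

lemma Lin_add: "fsupp D1 \<Longrightarrow> fsupp D2 \<Longrightarrow> Lin B D1 + Lin B D2 = Lin B (\<lambda>x. D1 x + D2 x)"
proof -
  assume f: "fsupp D1" "fsupp D2"
  let ?S = "{x. D1 x \<noteq> 0} \<union> {x. D2 x \<noteq> 0}"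
  have fin: "finite ?S" using f by (simp add: fsupp_def)
  show ?thesis
    by (subst (1 2 3) Lin_expand[OF fin]) (auto simp: sum.distrib sc_add_left)
qed

lemma Lin_scale: "fsupp D \<Longrightarrow> sc k (Lin B D) = Lin B (\<lambda>x. k * D x)"
proof -
  assume f: "fsupp D"
  let ?S = "{x. D x \<noteq> 0}"
  have fin: "finite ?S" using f by (simp add: fsupp_def)
  show ?thesis
    by (subst (1 2) Lin_expand[OF fin]) (auto simp: sc_def sum_distrib_left mult.assoc ph_mult)
qed

lemma Lin_cong: "(\<And>x. D1 x = D2 x) \<Longrightarrow> Lin B D1 = Lin B D2"
  by (simp add: Lin_def)

lemma Lin_cong_B: "(\<And>x. D x \<noteq> 0 \<Longrightarrow> B1 x = B2 x) \<Longrightarrow> Lin B1 D = Lin B2 D"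
  unfolding Lin_def by (rule Sum_any.cong) (metis sc_0)

lemma Lin_trans_aux:
  assumes "fsupp D"
  shows "Lin (\<lambda>x. \<Sum>(f, d)\<leftarrow>L. sc (f x) (B2 (sh d x))) D = Lin B2 (\<lambda>y. \<Sum>(f, d)\<leftarrow>L. f (sh (ng d) y) * D (sh (ng d) y))"
proof (induction L)
  case Nil then show ?case by (simp add: Lin_def)
next
  case (Cons p L)
  obtain f d where p: "p = (f, d)" by (cases p)
  have fD: "finite {x. D x \<noteq> 0}" using assms by (simp add: fsupp_def)
  have "Lin (\<lambda>x. \<Sum>(f, d)\<leftarrow>p # L. sc (f x) (B2 (sh d x))) D
      = Sum_any (\<lambda>x. sc (D x * f x) (B2 (sh d x)) + sc (D x) (\<Sum>(f, d)\<leftarrow>L. sc (f x) (B2 (sh d x))))"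
    by (simp add: Lin_def p sc_add)
  also have "\<dots> = Sum_any (\<lambda>x. sc (D x * f x) (B2 (sh d x))) + Lin (\<lambda>x. \<Sum>(f, d)\<leftarrow>L. sc (f x) (B2 (sh d x))) D"
    unfolding Lin_def by (rule Sum_any.distrib; rule finite_subset[OF _ fD]; auto)
  also have "Sum_any (\<lambda>x. sc (D x * f x) (B2 (sh d x))) = Sum_any (\<lambda>y. sc (f (sh (ng d) y) * D (sh (ng d) y)) (B2 y))"
    by (subst Sum_any_shift[of _ "ng d"]) (simp add: mult.commute)
  also have "\<dots> + Lin (\<lambda>x. \<Sum>(f, d)\<leftarrow>L. sc (f x) (B2 (sh d x))) D
     = Lin B2 (\<lambda>y. \<Sum>(f, d)\<leftarrow>p # L. f (sh (ng d) y) * D (sh (ng d) y))"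
  proof -
    have "Sum_any (\<lambda>y. sc (f (sh (ng d) y) * D (sh (ng d) y)) (B2 y)) = Lin B2 (\<lambda>y. f (sh (ng d) y) * D (sh (ng d) y))"
      by (simp add: Lin_def)
    then show ?thesis
      using Lin_add[OF fsupp_shift[OF assms] fsupp_trans[OF assms, of L]] Cons.IH
      by (simp add: p)
  qed
  finally show ?case .
qed

lemma Lin_trans:
  assumes "fsupp D" and "\<And>x. D x \<noteq> 0 \<Longrightarrow> B1 x = (\<Sum>(f, d)\<leftarrow>L. sc (f x) (B2 (sh d x)))"
  shows "Lin B1 D = Lin B2 (\<lambda>y. \<Sum>(f, d)\<leftarrow>L. f (sh (ng d) y) * D (sh (ng d) y))"
  using Lin_cong_B[of D B1 "\<lambda>x. \<Sum>(f, d)\<leftarrow>L. sc (f x) (B2 (sh d x))"] assms(2) Lin_trans_aux[OF assms(1)]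
  by simp

end

definition En :: "int \<Rightarrow> int \<Rightarrow> int \<Rightarrow> int \<Rightarrow> int" where
  "En n a c r = c * (2 * c - 1) - (if even n then 2 * c else 0) - (a + r) * (n - a - r - 2 * c) - a * r"
definition Dnat :: "Qq \<Rightarrow> int \<Rightarrow> int \<Rightarrow> int \<Rightarrow> int \<Rightarrow> Qq" where
  "Dnat k n a c r = qv powi En n a c r * frakp_div (n - a - r - 2 * c) k * ifct a * ifct r"

lemma odd_2m1: "\<not> even (2 * m - 1 :: int)" by simp
lemma odd_2m1': "\<not> even (2 * m + 1 :: int)" by simp

lemma Dnat_split: "Dnat k n a' c' r' = qv powi E0 * (qv powi (En n a' c' r' - E0) * frakp_div (n - a' - r' - 2 * c') k * ifct a' * ifct r')"
  unfolding Dnat_def by (simp add: qpow_mult)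

lemma ifct_r: "ifct r = qint (r + 1) * ifct (r + 1)"
  using ifct_pred[of "r + 1"] by simp
lemma ifct_rm1: "ifct (r - 1) = qint r * qint (r + 1) * ifct (r + 1)"
  using ifct_pred[of r] ifct_r[of r] by simp

lemma even_nat:
  fixes a c r m :: int and k :: Qq
  defines "n \<equiv> 2 * m - 1"
  shows
   "Dnat k n a c (r - 1)
    + k * qv powi (-2 * r) * Dnat k n a c r
    + qv powi (2 * (a - 1 + r - n + 2 * c) - 2 * r) * Dnat k n (a - 1) c r
    + (- (qv powi (4 * (2 - m) - 4) * qv powi (2 * (a - 1 + r - n + 2 * (c + 1)) - 2 * r))) * Dnat k n (a - 1) (c + 1) r
    + xr (r + 1) * qv powi (4 * (2 - m) + 4 * c - 2) * Dnat k n a c (r + 1)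
    + (- (xr (r + 1) * (qv powi -2 * (qv powi (4 * (c - 1) + 4) - 1)))) * Dnat k n a (c - 1) (r + 1)
    + yr (r + 1) * Dnat k n a c (r + 1)
   = qint (2 * m) * Dnat k (n + 1) a c r"
proof -
  define J where "J = n - a - r - 2 * c"
  define Z where "Z = qv powi (En n a c r) * ifct a * ifct (r + 1)"
  define P1 where "P1 = frakp_div (J + 1) k"
  define P0 where "P0 = frakp_div J k"
  define Pm1 where "Pm1 = frakp_div (J - 1) k"
  have rec: "qint (J + 1) * P1 = k * P0 + qv powi (2 - 2 * J) * qint (J - 2) * Pm1"
    unfolding P1_def P0_def Pm1_def by (rule frakp_div_rec)
  have ne: "\<not> even n" "even (n + 1)" by (simp_all add: n_def)
  have t1: "Dnat k n a c (r - 1) = Z * (qv powi (- a - 2 * c - 2 * r + 2 * m) * qint r * qint (r + 1) * P1)"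
  proof -
    have e: "En n a c (r - 1) = En n a c r + (- a - 2 * c - 2 * r + 2 * m)" unfolding En_def using ne by (simp add: n_def algebra_simps)
    have j: "n - a - (r - 1) - 2 * c = J + 1" by (simp add: J_def)
    show ?thesis unfolding Dnat_def e j Z_def P1_def ifct_rm1 power_int_add[OF disjI1[OF qv_nz]] by (simp add: ac_simps)
  qed
  have t2: "Dnat k n a c r = Z * (qint (r + 1) * P0)"
    unfolding Dnat_def Z_def P0_def J_def ifct_r[of r] by (simp add: ac_simps)
  have t3: "Dnat k n (a - 1) c r = Z * (qv powi (- 2 * a - 2 * c - r + 2 * m) * qint a * qint (r + 1) * P1)"
  proof -
    have e: "En n (a - 1) c r = En n a c r + (- 2 * a - 2 * c - r + 2 * m)" unfolding En_def using ne by (simp add: n_def algebra_simps)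
    have j: "n - (a - 1) - r - 2 * c = J + 1" by (simp add: J_def)
    show ?thesis unfolding Dnat_def e j Z_def P1_def ifct_pred ifct_r[of r] power_int_add[OF disjI1[OF qv_nz]] by (simp add: ac_simps)
  qed
  have t4: "Dnat k n (a - 1) (c + 1) r = Z * (qv powi (2 * c + r + 2 * m - 1) * qint a * qint (r + 1) * Pm1)"
  proof -
    have e: "En n (a - 1) (c + 1) r = En n a c r + (2 * c + r + 2 * m - 1)" unfolding En_def using ne by (simp add: n_def algebra_simps)
    have j: "n - (a - 1) - r - 2 * (c + 1) = J - 1" by (simp add: J_def)
    show ?thesis unfolding Dnat_def e j Z_def Pm1_def ifct_pred ifct_r[of r] power_int_add[OF disjI1[OF qv_nz]] by (simp add: ac_simps)
  qed
  have t5: "Dnat k n a c (r + 1) = Z * (qv powi (a + 2 * c + 2 * r - 2 * m + 2) * Pm1)"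
  proof -
    have e: "En n a c (r + 1) = En n a c r + (a + 2 * c + 2 * r - 2 * m + 2)" unfolding En_def using ne by (simp add: n_def algebra_simps)
    have j: "n - a - (r + 1) - 2 * c = J - 1" by (simp add: J_def)
    show ?thesis unfolding Dnat_def e j Z_def Pm1_def power_int_add[OF disjI1[OF qv_nz]] by (simp add: ac_simps)
  qed
  have t6: "Dnat k n a (c - 1) (r + 1) = Z * (qv powi (- a - 2 * c - 2 * m + 3) * P1)"
  proof -
    have e: "En n a (c - 1) (r + 1) = En n a c r + (- a - 2 * c - 2 * m + 3)" unfolding En_def using ne by (simp add: n_def algebra_simps)
    have j: "n - a - (r + 1) - 2 * (c - 1) = J + 1" by (simp add: J_def)
    show ?thesis unfolding Dnat_def e j Z_def P1_def power_int_add[OF disjI1[OF qv_nz]] by (simp add: ac_simps)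
  qed
  have tT: "Dnat k (n + 1) a c r = Z * (qv powi (- a - 2 * c - r) * qint (r + 1) * P1)"
  proof -
    have e: "En (n + 1) a c r = En n a c r + (- a - 2 * c - r)" unfolding En_def using ne by (simp add: n_def algebra_simps)
    have j: "n + 1 - a - r - 2 * c = J + 1" by (simp add: J_def)
    show ?thesis unfolding Dnat_def e j Z_def P1_def ifct_r[of r] power_int_add[OF disjI1[OF qv_nz]] by (simp add: ac_simps)
  qed
  define A where "A = qv powi a"
  define C where "C = qv powi c"
  define R where "R = qv powi r"
  define M where "M = qv powi m"
  define W where "W = qv^2 - 1"
  have Wnz: "W \<noteq> 0" using q2nz W_def by simp
  have nz: "A \<noteq> 0" "C \<noteq> 0" "R \<noteq> 0" "M \<noteq> 0" by (auto simp: A_def C_def R_def M_def)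
  have key:
   "Z * (qv powi (- a - 2 * c - 2 * r + 2 * m) * qint r * qint (r + 1) * P1)
    + k * qv powi (-2 * r) * (Z * (qint (r + 1) * P0))
    + qv powi (2 * (a - 1 + r - n + 2 * c) - 2 * r) * (Z * (qv powi (- 2 * a - 2 * c - r + 2 * m) * qint a * qint (r + 1) * P1))
    + (- (qv powi (4 * (2 - m) - 4) * qv powi (2 * (a - 1 + r - n + 2 * (c + 1)) - 2 * r))) * (Z * (qv powi (2 * c + r + 2 * m - 1) * qint a * qint (r + 1) * Pm1))
    + xr (r + 1) * qv powi (4 * (2 - m) + 4 * c - 2) * (Z * (qv powi (a + 2 * c + 2 * r - 2 * m + 2) * Pm1))
    + (- (xr (r + 1) * (qv powi -2 * (qv powi (4 * (c - 1) + 4) - 1)))) * (Z * (qv powi (- a - 2 * c - 2 * m + 3) * P1))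
    + yr (r + 1) * (Z * (qv powi (a + 2 * c + 2 * r - 2 * m + 2) * Pm1))
    - qint (2 * m) * (Z * (qv powi (- a - 2 * c - r) * qint (r + 1) * P1))
   = Z * (- (qv powi (-2 * r)) * qint (r + 1)) * (qint (J + 1) * P1 - k * P0 - qv powi (2 - 2 * J) * qint (J - 2) * Pm1)"
    unfolding J_def n_def xr_def yr_def qint_alt qden_alt W_def[symmetric]
    apply (simp add: qsplit A_def[symmetric] C_def[symmetric] R_def[symmetric] M_def[symmetric])
    apply (simp add: field_simps nz Wnz)
    unfolding W_def
    apply algebra
    done
  show ?thesis unfolding t1 t2 t3 t4 t5 t6 tT using key rec by simp
qed


lemma odd_nat:
  fixes a c r m :: int and k :: Qq
  defines "n \<equiv> 2 * m"
  shows
   "Dnat k n a c (r - 1)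
    + k * qv powi (-2 * r) * Dnat k n a c r
    + qv powi (2 * (a - 1 + r - n + 2 * c) - 2 * r) * Dnat k n (a - 1) c r
    + (- (qv powi (4 * (2 - m) - 4) * qv powi (2 * (a - 1 + r - n + 2 * (c + 1)) - 2 * r))) * Dnat k n (a - 1) (c + 1) r
    + xr (r + 1) * qv powi (4 * (2 - m) + 4 * c - 2) * Dnat k n a c (r + 1)
    + (- (xr (r + 1) * (qv powi -2 * (qv powi (4 * (c - 1) + 4) - 1)))) * Dnat k n a (c - 1) (r + 1)
    + yr (r + 1) * Dnat k n a c (r + 1)
    - qint n * (qv powi (4 * (2 - m) + 4 * c - 2) * Dnat k (n - 1) a c r
        + (- (qv powi -2 * (qv powi (4 * (c - 1) + 4) - 1))) * Dnat k (n - 1) a (c - 1) r)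
   = qint (n + 1) * (Dnat k (n + 1) a c r + (- (qv powi (4 * (2 - m) - 4))) * Dnat k (n + 1) a (c + 1) r)"
proof -
  define J where "J = n - a - r - 2 * c"
  define Z where "Z = qv powi (En n a c r) * ifct a * ifct (r + 1)"
  define P1 where "P1 = frakp_div (J + 1) k"
  define P0 where "P0 = frakp_div J k"
  define Pm1 where "Pm1 = frakp_div (J - 1) k"
  have rec: "qint (J + 1) * P1 = k * P0 + qv powi (2 - 2 * J) * qint (J - 2) * Pm1"
    unfolding P1_def P0_def Pm1_def by (rule frakp_div_rec)
  have ne: "even n" "\<not> even (n - 1)" "\<not> even (n + 1)" by (simp_all add: n_def)
  have t1: "Dnat k n a c (r - 1) = Z * (qv powi (- a - 2 * c - 2 * r + 2 * m + 1) * qint r * qint (r + 1) * P1)"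
  proof -
    have e: "En n a c (r - 1) = En n a c r + (- a - 2 * c - 2 * r + 2 * m + 1)" unfolding En_def using ne by (simp add: n_def algebra_simps)
    have j: "n - a - (r - 1) - 2 * c = J + 1" by (simp add: J_def)
    show ?thesis unfolding Dnat_def e j Z_def P1_def ifct_rm1 power_int_add[OF disjI1[OF qv_nz]] by (simp add: ac_simps)
  qed
  have t2: "Dnat k n a c r = Z * (qint (r + 1) * P0)"
    unfolding Dnat_def Z_def P0_def J_def ifct_r[of r] by (simp add: ac_simps)
  have t3: "Dnat k n (a - 1) c r = Z * (qv powi (- 2 * a - 2 * c - r + 2 * m + 1) * qint a * qint (r + 1) * P1)"
  proof -
    have e: "En n (a - 1) c r = En n a c r + (- 2 * a - 2 * c - r + 2 * m + 1)" unfolding En_def using ne by (simp add: n_def algebra_simps)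
    have j: "n - (a - 1) - r - 2 * c = J + 1" by (simp add: J_def)
    show ?thesis unfolding Dnat_def e j Z_def P1_def ifct_pred ifct_r[of r] power_int_add[OF disjI1[OF qv_nz]] by (simp add: ac_simps)
  qed
  have t4: "Dnat k n (a - 1) (c + 1) r = Z * (qv powi (2 * c + r + 2 * m - 2) * qint a * qint (r + 1) * Pm1)"
  proof -
    have e: "En n (a - 1) (c + 1) r = En n a c r + (2 * c + r + 2 * m - 2)" unfolding En_def using ne by (simp add: n_def algebra_simps)
    have j: "n - (a - 1) - r - 2 * (c + 1) = J - 1" by (simp add: J_def)
    show ?thesis unfolding Dnat_def e j Z_def Pm1_def ifct_pred ifct_r[of r] power_int_add[OF disjI1[OF qv_nz]] by (simp add: ac_simps)
  qed
  have t5: "Dnat k n a c (r + 1) = Z * (qv powi (a + 2 * c + 2 * r - 2 * m + 1) * Pm1)"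
  proof -
    have e: "En n a c (r + 1) = En n a c r + (a + 2 * c + 2 * r - 2 * m + 1)" unfolding En_def using ne by (simp add: n_def algebra_simps)
    have j: "n - a - (r + 1) - 2 * c = J - 1" by (simp add: J_def)
    show ?thesis unfolding Dnat_def e j Z_def Pm1_def power_int_add[OF disjI1[OF qv_nz]] by (simp add: ac_simps)
  qed
  have t6: "Dnat k n a (c - 1) (r + 1) = Z * (qv powi (- a - 2 * c - 2 * m + 4) * P1)"
  proof -
    have e: "En n a (c - 1) (r + 1) = En n a c r + (- a - 2 * c - 2 * m + 4)" unfolding En_def using ne by (simp add: n_def algebra_simps)
    have j: "n - a - (r + 1) - 2 * (c - 1) = J + 1" by (simp add: J_def)
    show ?thesis unfolding Dnat_def e j Z_def P1_def power_int_add[OF disjI1[OF qv_nz]] by (simp add: ac_simps)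
  qed
  have s1: "Dnat k (n - 1) a c r = Z * (qv powi (a + 2 * c + r) * qint (r + 1) * Pm1)"
  proof -
    have e: "En (n - 1) a c r = En n a c r + (a + 2 * c + r)" unfolding En_def using ne by (simp add: n_def algebra_simps)
    have j: "n - 1 - a - r - 2 * c = J - 1" by (simp add: J_def)
    show ?thesis unfolding Dnat_def e j Z_def Pm1_def ifct_r[of r] power_int_add[OF disjI1[OF qv_nz]] by (simp add: ac_simps)
  qed
  have s2: "Dnat k (n - 1) a (c - 1) r = Z * (qv powi (- a - 2 * c - r + 3) * qint (r + 1) * P1)"
  proof -
    have e: "En (n - 1) a (c - 1) r = En n a c r + (- a - 2 * c - r + 3)" unfolding En_def using ne by (simp add: n_def algebra_simps)
    have j: "n - 1 - a - r - 2 * (c - 1) = J + 1" by (simp add: J_def)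
    show ?thesis unfolding Dnat_def e j Z_def P1_def ifct_r[of r] power_int_add[OF disjI1[OF qv_nz]] by (simp add: ac_simps)
  qed
  have c1: "Dnat k (n + 1) a c r = Z * (qv powi (- a + 2 * c - r) * qint (r + 1) * P1)"
  proof -
    have e: "En (n + 1) a c r = En n a c r + (- a + 2 * c - r)" unfolding En_def using ne by (simp add: n_def algebra_simps)
    have j: "n + 1 - a - r - 2 * c = J + 1" by (simp add: J_def)
    show ?thesis unfolding Dnat_def e j Z_def P1_def ifct_r[of r] power_int_add[OF disjI1[OF qv_nz]] by (simp add: ac_simps)
  qed
  have c2: "Dnat k (n + 1) a (c + 1) r = Z * (qv powi (a + 6 * c + r + 1) * qint (r + 1) * Pm1)"
  proof -
    have e: "En (n + 1) a (c + 1) r = En n a c r + (a + 6 * c + r + 1)" unfolding En_def using ne by (simp add: n_def algebra_simps)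
    have j: "n + 1 - a - r - 2 * (c + 1) = J - 1" by (simp add: J_def)
    show ?thesis unfolding Dnat_def e j Z_def Pm1_def ifct_r[of r] power_int_add[OF disjI1[OF qv_nz]] by (simp add: ac_simps)
  qed
  define A where "A = qv powi a"
  define C where "C = qv powi c"
  define R where "R = qv powi r"
  define M where "M = qv powi m"
  define W where "W = qv^2 - 1"
  have Wnz: "W \<noteq> 0" using q2nz W_def by simp
  have nz: "A \<noteq> 0" "C \<noteq> 0" "R \<noteq> 0" "M \<noteq> 0" by (auto simp: A_def C_def R_def M_def)
  have key:
   "Z * (qv powi (- a - 2 * c - 2 * r + 2 * m + 1) * qint r * qint (r + 1) * P1)
    + k * qv powi (-2 * r) * (Z * (qint (r + 1) * P0))
    + qv powi (2 * (a - 1 + r - n + 2 * c) - 2 * r) * (Z * (qv powi (- 2 * a - 2 * c - r + 2 * m + 1) * qint a * qint (r + 1) * P1))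
    + (- (qv powi (4 * (2 - m) - 4) * qv powi (2 * (a - 1 + r - n + 2 * (c + 1)) - 2 * r))) * (Z * (qv powi (2 * c + r + 2 * m - 2) * qint a * qint (r + 1) * Pm1))
    + xr (r + 1) * qv powi (4 * (2 - m) + 4 * c - 2) * (Z * (qv powi (a + 2 * c + 2 * r - 2 * m + 1) * Pm1))
    + (- (xr (r + 1) * (qv powi -2 * (qv powi (4 * (c - 1) + 4) - 1)))) * (Z * (qv powi (- a - 2 * c - 2 * m + 4) * P1))
    + yr (r + 1) * (Z * (qv powi (a + 2 * c + 2 * r - 2 * m + 1) * Pm1))
    - qint n * (qv powi (4 * (2 - m) + 4 * c - 2) * (Z * (qv powi (a + 2 * c + r) * qint (r + 1) * Pm1))
        + (- (qv powi -2 * (qv powi (4 * (c - 1) + 4) - 1))) * (Z * (qv powi (- a - 2 * c - r + 3) * qint (r + 1) * P1)))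
    - qint (n + 1) * (Z * (qv powi (- a + 2 * c - r) * qint (r + 1) * P1) + (- (qv powi (4 * (2 - m) - 4))) * (Z * (qv powi (a + 6 * c + r + 1) * qint (r + 1) * Pm1)))
   = Z * (- (qv powi (-2 * r)) * qint (r + 1)) * (qint (J + 1) * P1 - k * P0 - qv powi (2 - 2 * J) * qint (J - 2) * Pm1)"
    unfolding J_def n_def xr_def yr_def qint_alt qden_alt W_def[symmetric]
    apply (simp add: qsplit A_def[symmetric] C_def[symmetric] R_def[symmetric] M_def[symmetric])
    apply (simp add: field_simps nz Wnz)
    unfolding W_def
    apply algebra
    done
  have z: "Z * (- (qv powi (-2 * r)) * qint (r + 1)) * (qint (J + 1) * P1 - k * P0 - qv powi (2 - 2 * J) * qint (J - 2) * Pm1) = 0"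
    using rec by simp
  show ?thesis unfolding t1 t2 t3 t4 t5 t6 s1 s2 c1 c2 using key z by (metis right_minus_eq)
qed

definition Dn :: "Qq \<Rightarrow> int \<Rightarrow> int \<times> int \<times> int \<Rightarrow> Qq" where
  "Dn k n x = (case x of (a, c, r) \<Rightarrow> if c < 0 then 0 else Dnat k n a c r)"

lemma Dn_simp[simp]: "Dn k n (a, c, r) = (if c < 0 then 0 else Dnat k n a c r)"
  by (simp add: Dn_def)

lemma Dnat_nz: "Dnat k n a c r \<noteq> 0 \<Longrightarrow> 0 \<le> a \<and> 0 \<le> r \<and> a + r + 2 * c \<le> n"
  unfolding Dnat_def ifct_def frakp_div_def by (auto split: if_splits)

lemma Dn_nz: "Dn k n (a, c, r) \<noteq> 0 \<Longrightarrow> 0 \<le> a \<and> 0 \<le> c \<and> 0 \<le> r \<and> a + r + 2 * c \<le> n"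
  using Dnat_nz by (auto split: if_splits)

lemma fsupp_Dn: "fsupp (Dn k n)"
proof -
  have "{x. Dn k n x \<noteq> 0} \<subseteq> {0..n} \<times> {0..n} \<times> {0..n}"
  proof
    fix x assume "x \<in> {x. Dn k n x \<noteq> 0}"
    then obtain a c r where x: "x = (a, c, r)" and "Dn k n (a, c, r) \<noteq> 0" by (cases x) auto
    then have "0 \<le> a \<and> 0 \<le> c \<and> 0 \<le> r \<and> a + r + 2 * c \<le> n" using Dn_nz by blast
    then show "x \<in> {0..n} \<times> {0..n} \<times> {0..n}" using x by auto
  qed
  then show ?thesis unfolding fsupp_def by (rule finite_subset) auto
qed

lemma Lt_eval: "(\<Sum>(f, d)\<leftarrow>Lt al N k. f (sh (ng d) (a, c, r)) * D (sh (ng d) (a, c, r))) =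
    D (a, c, r - 1) + k * qv powi (-2 * r) * D (a, c, r)
  + qv powi (2 * (a - 1 + r - N + 2 * c) - 2 * r) * D (a - 1, c, r)
  + (if c + 1 = 0 then 0 else - (qv powi (4 * al - 4) * qv powi (2 * (a - 1 + r - N + 2 * (c + 1)) - 2 * r))) * D (a - 1, c + 1, r)
  + xr (r + 1) * qv powi (4 * al + 4 * c - 2) * D (a, c, r + 1)
  + (- (xr (r + 1) * (qv powi -2 * (qv powi (4 * (c - 1) + 4) - 1)))) * D (a, c - 1, r + 1)
  + yr (r + 1) * D (a, c, r + 1)"
  by (simp add: Lt_def ng_def algebra_simps)

lemma Lsh_eval: "(\<Sum>(f, d)\<leftarrow>Lsh al. f (sh (ng d) (a, c, r)) * D (sh (ng d) (a, c, r))) =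
    qv powi (4 * al + 4 * c - 2) * D (a, c, r) + (- (qv powi -2 * (qv powi (4 * (c - 1) + 4) - 1))) * D (a, c - 1, r)"
  by (simp add: Lsh_def ng_def)

lemma Lconv_eval: "(\<Sum>(f, d)\<leftarrow>Lconv al. f (sh (ng d) (a, c, r)) * D (sh (ng d) (a, c, r))) =
    D (a, c, r) + (if c + 1 = 0 then 0 else - (qv powi (4 * al - 4))) * D (a, c + 1, r)"
  by (simp add: Lconv_def ng_def)


lemma even_pt: "(\<Sum>(f, d)\<leftarrow>Lt (2 - m) (2 * m - 1) k. f (sh (ng d) y) * Dn k (2 * m - 1) (sh (ng d) y)) = qint (2 * m) * Dn k (2 * m) y"
proof -
  obtain a c r where y: "y = (a, c, r)" by (cases y) auto
  show ?thesis
  proof (cases "c < 0")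
    case True
    then show ?thesis unfolding y Lt_eval by simp
  next
    case False
    let ?n = "2 * m - 1"
    have d0: "\<And>a' r'. Dn k n (a', c, r') = Dnat k n a' c r'" for n using False by simp
    have d1: "\<And>a' r'. Dn k n (a', c + 1, r') = Dnat k n a' (c + 1) r'" for n using False by simp
    have d6: "(- (xr (r + 1) * (qv powi -2 * (qv powi (4 * (c - 1) + 4) - 1)))) * Dn k ?n (a, c - 1, r + 1)
       = (- (xr (r + 1) * (qv powi -2 * (qv powi (4 * (c - 1) + 4) - 1)))) * Dnat k ?n a (c - 1) (r + 1)"
      using False by (cases "c = 0") auto
    have if1: "(if c + 1 = 0 then 0 else x) = x" for x :: Qq using False by simp
    show ?thesis unfolding y Lt_eval if1 d6 d0 d1 using even_nat[of k m a c r] by simp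
  qed
qed

lemma odd_pt: "(\<Sum>(f, d)\<leftarrow>Lt (2 - m) (2 * m) k. f (sh (ng d) y) * Dn k (2 * m) (sh (ng d) y))
   - qint (2 * m) * (\<Sum>(f, d)\<leftarrow>Lsh (2 - m). f (sh (ng d) y) * Dn k (2 * m - 1) (sh (ng d) y))
   = qint (2 * m + 1) * (\<Sum>(f, d)\<leftarrow>Lconv (2 - m). f (sh (ng d) y) * Dn k (2 * m + 1) (sh (ng d) y))"
proof -
  obtain a c r where y: "y = (a, c, r)" by (cases y) auto
  show ?thesis
  proof (cases "c < 0")
    case True
    then show ?thesis unfolding y Lt_eval Lsh_eval Lconv_eval by simp
  next
    case False
    have d0: "\<And>a' r'. Dn k n (a', c, r') = Dnat k n a' c r'" for n using False by simp
    have d1: "\<And>a' r'. Dn k n (a', c + 1, r') = Dnat k n a' (c + 1) r'" for n using False by simp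
    have d6: "(- (xr (r + 1) * (qv powi -2 * (qv powi (4 * (c - 1) + 4) - 1)))) * Dn k n (a, c - 1, r + 1)
       = (- (xr (r + 1) * (qv powi -2 * (qv powi (4 * (c - 1) + 4) - 1)))) * Dnat k n a (c - 1) (r + 1)" for n
      using False by (cases "c = 0") auto
    have d7: "(- (qv powi -2 * (qv powi (4 * (c - 1) + 4) - 1))) * Dn k n (a, c - 1, r)
       = (- (qv powi -2 * (qv powi (4 * (c - 1) + 4) - 1))) * Dnat k n a (c - 1) r" for n
      using False by (cases "c = 0") auto
    have if1: "(if c + 1 = 0 then 0 else x) = x" for x :: Qq using False by simp
    show ?thesis unfolding y Lt_eval Lsh_eval Lconv_eval if1 d6 d7 d0 d1 using odd_nat[of k m a c r] by simp
  qed
qed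

context urep
begin

lemma foldr_tp: "foldr (\<lambda>j acc. (t - \<phi> (qint (2 * j))) * acc) xs z = foldr (\<lambda>j acc. (t - \<phi> (qint (2 * j))) * acc) xs 1 * z"
  by (induction xs) (simp_all add: mult.assoc)

lemma tprod_comm: "t * tprod \<phi> t lo hi = tprod \<phi> t lo hi * t"
proof -
  have "t * foldr (\<lambda>j acc. (t - \<phi> (qint (2 * j))) * acc) xs 1 = foldr (\<lambda>j acc. (t - \<phi> (qint (2 * j))) * acc) xs 1 * t" for xs
  proof (induction xs)
    case Nil then show ?case by simp
  next
    case (Cons j xs)
    have "t * (t - \<phi> (qint (2 * j))) = (t - \<phi> (qint (2 * j))) * t"
      by (simp add: left_diff_distrib right_diff_distrib ph_comm)
    then show ?case using Cons by (simp add: mult.assoc[symmetric]) (simp add: mult.assoc)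
  qed
  then show ?thesis by (simp add: tprod_def)
qed

lemma tprod_ph_comm: "\<phi> x * tprod \<phi> t lo hi = tprod \<phi> t lo hi * \<phi> x"
  by (simp add: ph_comm)

lemma tprod_ext: assumes "lo \<le> hi"
  shows "tprod \<phi> t (lo - 1) (hi + 1) = (t - \<phi> (qint (2 * (lo - 1)))) * tprod \<phi> t lo hi * (t - \<phi> (qint (2 * (hi + 1))))"
proof -
  have 1: "[lo - 1..hi + 1] = (lo - 1) # [lo..hi + 1]"
    using assms upto_rec1[of "lo - 1" "hi + 1"] by simp
  have 2: "[lo..hi + 1] = [lo..hi] @ [hi + 1]"
    using assms upto_rec2[of lo "hi + 1"] by simp
  have "[lo - 1..hi + 1] = (lo - 1) # [lo..hi] @ [hi + 1]" using 1 2 by simp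
  then have "tprod \<phi> t (lo - 1) (hi + 1) = (t - \<phi> (qint (2 * (lo - 1)))) * foldr (\<lambda>j acc. (t - \<phi> (qint (2 * j))) * acc) [lo..hi] ((t - \<phi> (qint (2 * (hi + 1)))) * 1)"
    unfolding tprod_def by simp
  also have "foldr (\<lambda>j acc. (t - \<phi> (qint (2 * j))) * acc) [lo..hi] ((t - \<phi> (qint (2 * (hi + 1)))) * 1)
     = tprod \<phi> t lo hi * ((t - \<phi> (qint (2 * (hi + 1)))) * 1)"
    unfolding tprod_def by (rule foldr_tp)
  finally show ?thesis by (simp add: mult.assoc)
qed

lemma qfact_int: "qfact (Suc n) = qfact n * qint (int n + 1)"
  by (simp add: qfact_Suc add.commute)

lemma tdot_1: "tdot \<phi> t 1 = t"
  by (simp add: tdot_def tprod_def qfact_def ph1 ph0)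

lemma tdot_even: assumes "1 \<le> m"
  shows "sc (qint (2 * int m)) (tdot \<phi> t (2 * m)) = tdot \<phi> t (2 * m - 1) * t"
proof -
  let ?P = "tprod \<phi> t (- int m + 1) (int m - 1)"
  have d1: "tdot \<phi> t (2 * m) = sc (1 / qfact (2 * m)) (t * ?P)"
    by (simp add: tdot_def sc_def mult.assoc)
  have dv: "(2 * m - 1) div 2 = m - 1" using assms by presburger
  have od: "\<not> even (2 * m - 1)" using assms by presburger
  have d2: "tdot \<phi> t (2 * m - 1) = sc (1 / qfact (2 * m - 1)) ?P"
    unfolding tdot_def dv using assms od by (simp add: sc_def of_nat_diff)
  have qf: "qfact (2 * m) = qfact (2 * m - 1) * qint (2 * int m)"
  proof -
    have "2 * m = Suc (2 * m - 1)" using assms by simp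
    then show ?thesis using qfact_int[of "2 * m - 1"] assms by (simp add: of_nat_diff)
  qed
  have nz: "qfact (2 * m - 1) \<noteq> 0" "qint (2 * int m) \<noteq> 0" using qfact_nz qint_nz assms by auto
  show ?thesis unfolding d1 d2 using nz by (simp add: qf tprod_comm)
qed

lemma tdot_odd: assumes "1 \<le> m"
  shows "sc (qint (2 * int m + 1)) (tdot \<phi> t (2 * m + 1)) = tdot \<phi> t (2 * m) * t - sc (qint (2 * int m)) (tdot \<phi> t (2 * m - 1))"
proof -
  define P where "P = tprod \<phi> t (- int m + 1) (int m - 1)"
  let ?c = "qint (2 * int m)"
  have d1: "tdot \<phi> t (2 * m) = sc (1 / qfact (2 * m)) (t * P)"
    by (simp add: tdot_def sc_def mult.assoc P_def)
  have dv: "(2 * m - 1) div 2 = m - 1" using assms by presburger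
  have od: "\<not> even (2 * m - 1)" using assms by presburger
  have d2: "tdot \<phi> t (2 * m - 1) = sc (1 / qfact (2 * m - 1)) P"
    unfolding tdot_def dv using assms od by (simp add: sc_def of_nat_diff P_def)
  have dv3: "(2 * m + 1) div 2 = m" by presburger
  have ext: "tprod \<phi> t (- int m) (int m) = (t + sc ?c 1) * P * (t - sc ?c 1)"
  proof -
    have "- int m + 1 \<le> int m - 1" using assms by simp
    from tprod_ext[OF this] show ?thesis by (simp add: qint_neg sc_def ph_uminus P_def)
  qed
  have d3: "tdot \<phi> t (2 * m + 1) = sc (1 / qfact (2 * m + 1)) ((t + sc ?c 1) * P * (t - sc ?c 1))"
    unfolding tdot_def dv3 ext by (simp add: sc_def mult.assoc)
  have qf: "qfact (2 * m) = qfact (2 * m - 1) * ?c"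
  proof -
    have "2 * m = Suc (2 * m - 1)" using assms by simp
    then show ?thesis using qfact_int[of "2 * m - 1"] assms by (simp add: of_nat_diff)
  qed
  have qf2: "qfact (Suc (2 * m)) = qfact (2 * m) * qint (2 * int m + 1)"
    using qfact_int[of "2 * m"] by simp
  have nz: "qfact (2 * m - 1) \<noteq> 0" "?c \<noteq> 0" "qint (2 * int m + 1) \<noteq> 0" using qfact_nz qint_nz assms by auto
  have tc: "t * P = P * t" unfolding P_def by (rule tprod_comm)
  have alg: "(t + sc ?c 1) * P * (t - sc ?c 1) = P * (t * t) - sc (?c * ?c) P"
  proof -
    have "(t + sc ?c 1) * P * (t - sc ?c 1) = (t * P + sc ?c P) * (t - sc ?c 1)"
      by (simp add: distrib_right)
    also have "\<dots> = (P * t + sc ?c P) * (t - sc ?c 1)" by (simp only: tc)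
    also have "\<dots> = P * (t * t) - sc (?c * ?c) P"
      by (simp add: distrib_right right_diff_distrib mult.assoc scs)
    finally show ?thesis .
  qed
  have lhs: "sc (qint (2 * int m + 1)) (tdot \<phi> t (2 * m + 1)) = sc (1 / qfact (2 * m)) (P * (t * t) - sc (?c * ?c) P)"
    unfolding d3 alg using nz qfact_nz[of "2 * m"] by (simp add: qf2)
  have rhs: "tdot \<phi> t (2 * m) * t - sc ?c (tdot \<phi> t (2 * m - 1)) = sc (1 / qfact (2 * m)) (P * (t * t) - sc (?c * ?c) P)"
    unfolding d1 d2 using nz by (simp add: qf tc mult.assoc[symmetric] sc_diff)
  show ?thesis using lhs rhs by simp
qed


lemma Lin_diff: "fsupp D1 \<Longrightarrow> fsupp D2 \<Longrightarrow> Lin B D1 - Lin B D2 = Lin B (\<lambda>x. D1 x - D2 x)"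
proof -
  assume f: "fsupp D1" "fsupp D2"
  let ?S = "{x. D1 x \<noteq> 0} \<union> {x. D2 x \<noteq> 0}"
  have fin: "finite ?S" using f by (simp add: fsupp_def)
  show ?thesis
    by (subst (1 2 3) Lin_expand[OF fin]) (auto simp: sum_subtractf sc_diff_left)
qed

lemma sc_cancel: "c \<noteq> 0 \<Longrightarrow> sc c x = sc c y \<Longrightarrow> x = y"
proof -
  assume "c \<noteq> 0" "sc c x = sc c y"
  then have "sc (1 / c) (sc c x) = sc (1 / c) (sc c y)" by simp
  with \<open>c \<noteq> 0\<close> show ?thesis by simp
qed

lemma Lin_times_t:
  "Lin (Bb al N) (Dn k n) * (F + e + \<phi> k' * Kinv) = Lin (Bb al (N + 1)) (\<lambda>y. \<Sum>(f, d)\<leftarrow>Lt al N k'. f (sh (ng d) y) * Dn k n (sh (ng d) y))"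
proof -
  have "Lin (Bb al N) (Dn k n) * (F + e + \<phi> k' * Kinv) = Lin (\<lambda>x. Bb al N x * (F + e + \<phi> k' * Kinv)) (Dn k n)"
    by (rule Lin_mult_right[OF fsupp_Dn])
  also have "\<dots> = Lin (Bb al (N + 1)) (\<lambda>y. \<Sum>(f, d)\<leftarrow>Lt al N k'. f (sh (ng d) y) * Dn k n (sh (ng d) y))"
  proof (rule Lin_trans[OF fsupp_Dn])
    fix x assume "Dn k n x \<noteq> 0"
    moreover obtain a c r where x: "x = (a, c, r)" by (cases x) auto
    ultimately have "0 \<le> a" "0 \<le> c" "0 \<le> r" using Dn_nz by blast+
    then show "Bb al N x * (F + e + \<phi> k' * Kinv) = (\<Sum>(f, d)\<leftarrow>Lt al N k'. sc (f x) (Bb al (N + 1) (sh d x)))"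
      unfolding x by (rule Bt)
  qed
  finally show ?thesis .
qed

lemma Lin_shN:
  "Lin (Bb al N) (Dn k n) = Lin (Bb al (N + 2)) (\<lambda>y. \<Sum>(f, d)\<leftarrow>Lsh al. f (sh (ng d) y) * Dn k n (sh (ng d) y))"
proof (rule Lin_trans[OF fsupp_Dn])
  fix x assume "Dn k n x \<noteq> 0"
  moreover obtain a c r where x: "x = (a, c, r)" by (cases x) auto
  ultimately have "0 \<le> a" "0 \<le> c" "0 \<le> r" using Dn_nz by blast+
  then show "Bb al N x = (\<Sum>(f, d)\<leftarrow>Lsh al. sc (f x) (Bb al (N + 2) (sh d x)))"
    unfolding x by (rule Bsh)
qed

lemma Lin_conv:
  "Lin (Bb (al - 1) N) (Dn k n) = Lin (Bb al N) (\<lambda>y. \<Sum>(f, d)\<leftarrow>Lconv al. f (sh (ng d) y) * Dn k n (sh (ng d) y))"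
proof (rule Lin_trans[OF fsupp_Dn])
  fix x assume "Dn k n x \<noteq> 0"
  moreover obtain a c r where x: "x = (a, c, r)" by (cases x) auto
  ultimately have "0 \<le> a" "0 \<le> c" "0 \<le> r" using Dn_nz by blast+
  then show "Bb (al - 1) N x = (\<Sum>(f, d)\<leftarrow>Lconv al. sc (f x) (Bb al N (sh d x)))"
    unfolding x by (rule Bconv)
qed

lemma step_even:
  assumes m: "1 \<le> m"
    and h: "tdot \<phi> (F + e + \<phi> k * Kinv) (2 * m - 1) = Lin (Bb (2 - int m) (2 * int m - 1)) (Dn k (2 * int m - 1))"
  shows "tdot \<phi> (F + e + \<phi> k * Kinv) (2 * m) = Lin (Bb (2 - int m) (2 * int m)) (Dn k (2 * int m))"
proof -
  let ?t = "F + e + \<phi> k * Kinv"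
  have N: "2 * int m - 1 + 1 = 2 * int m" by simp
  have "sc (qint (2 * int m)) (tdot \<phi> ?t (2 * m)) = tdot \<phi> ?t (2 * m - 1) * ?t"
    by (rule tdot_even[OF m])
  also have "\<dots> = Lin (Bb (2 - int m) (2 * int m)) (\<lambda>y. \<Sum>(f, d)\<leftarrow>Lt (2 - int m) (2 * int m - 1) k. f (sh (ng d) y) * Dn k (2 * int m - 1) (sh (ng d) y))"
    unfolding h Lin_times_t N ..
  also have "\<dots> = Lin (Bb (2 - int m) (2 * int m)) (\<lambda>y. qint (2 * int m) * Dn k (2 * int m) y)"
    by (rule Lin_cong) (rule even_pt)
  also have "\<dots> = sc (qint (2 * int m)) (Lin (Bb (2 - int m) (2 * int m)) (Dn k (2 * int m)))"
    by (rule Lin_scale[OF fsupp_Dn, symmetric])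
  finally show ?thesis using qint_nz[of "2 * int m"] m by (auto elim: sc_cancel)
qed

lemma step_odd:
  assumes m: "1 \<le> m"
    and h1: "tdot \<phi> (F + e + \<phi> k * Kinv) (2 * m - 1) = Lin (Bb (2 - int m) (2 * int m - 1)) (Dn k (2 * int m - 1))"
    and h2: "tdot \<phi> (F + e + \<phi> k * Kinv) (2 * m) = Lin (Bb (2 - int m) (2 * int m)) (Dn k (2 * int m))"
  shows "tdot \<phi> (F + e + \<phi> k * Kinv) (2 * m + 1) = Lin (Bb (1 - int m) (2 * int m + 1)) (Dn k (2 * int m + 1))"
proof -
  let ?t = "F + e + \<phi> k * Kinv"
  let ?al = "2 - int m"
  let ?S = "\<lambda>y. \<Sum>(f, d)\<leftarrow>Lt ?al (2 * int m) k. f (sh (ng d) y) * Dn k (2 * int m) (sh (ng d) y)"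
  let ?H = "\<lambda>y. \<Sum>(f, d)\<leftarrow>Lsh ?al. f (sh (ng d) y) * Dn k (2 * int m - 1) (sh (ng d) y)"
  let ?C = "\<lambda>y. \<Sum>(f, d)\<leftarrow>Lconv ?al. f (sh (ng d) y) * Dn k (2 * int m + 1) (sh (ng d) y)"
  have N1: "2 * int m - 1 + 2 = 2 * int m + 1" by simp
  have fS: "fsupp ?S" by (rule fsupp_trans[OF fsupp_Dn])
  have fH: "fsupp ?H" by (rule fsupp_trans[OF fsupp_Dn])
  have fC: "fsupp ?C" by (rule fsupp_trans[OF fsupp_Dn])
  have a1: "tdot \<phi> ?t (2 * m) * ?t = Lin (Bb ?al (2 * int m + 1)) ?S"
    unfolding h2 Lin_times_t ..
  have a2: "tdot \<phi> ?t (2 * m - 1) = Lin (Bb ?al (2 * int m + 1)) ?H"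
    unfolding h1 Lin_shN N1 ..
  have "sc (qint (2 * int m + 1)) (tdot \<phi> ?t (2 * m + 1)) = tdot \<phi> ?t (2 * m) * ?t - sc (qint (2 * int m)) (tdot \<phi> ?t (2 * m - 1))"
    by (rule tdot_odd[OF m])
  also have "\<dots> = Lin (Bb ?al (2 * int m + 1)) ?S - Lin (Bb ?al (2 * int m + 1)) (\<lambda>y. qint (2 * int m) * ?H y)"
    unfolding a1 a2 Lin_scale[OF fH] ..
  also have "\<dots> = Lin (Bb ?al (2 * int m + 1)) (\<lambda>y. ?S y - qint (2 * int m) * ?H y)"
    by (rule Lin_diff[OF fS fsupp_scale[OF fH]])
  also have "\<dots> = Lin (Bb ?al (2 * int m + 1)) (\<lambda>y. qint (2 * int m + 1) * ?C y)"
    by (rule Lin_cong) (rule odd_pt)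
  also have "\<dots> = sc (qint (2 * int m + 1)) (Lin (Bb ?al (2 * int m + 1)) ?C)"
    by (rule Lin_scale[OF fC, symmetric])
  also have "Lin (Bb ?al (2 * int m + 1)) ?C = Lin (Bb (?al - 1) (2 * int m + 1)) (Dn k (2 * int m + 1))"
    by (rule Lin_conv[symmetric])
  also have "?al - 1 = 1 - int m" by simp
  finally show ?thesis using qint_nz[of "2 * int m + 1"] m by (auto elim: sc_cancel)
qed

end

lemma choose2c: "int ((2 * c) choose 2) = int c * (2 * int c - 1)"
proof -
  have "(2 * c) choose 2 = (2 * c) * (2 * c - 1) div 2" by (simp add: choose_two)
  also have "(2 * c) * (2 * c - 1) div 2 = c * (2 * c - 1)" by simp
  finally show ?thesis by (cases c) (simp_all add: of_nat_diff algebra_simps)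
qed

context urep
begin

lemma base_case: "Lin (Bb 1 1) (Dn k 1) = F + e + \<phi> k * Kinv"
proof -
  let ?S = "{(0, 0, 0), (1, 0, 0), (0, 0, 1)} :: (int \<times> int \<times> int) set"
  have sub: "{x. Dn k 1 x \<noteq> 0} \<subseteq> ?S"
  proof
    fix x assume "x \<in> {x. Dn k 1 x \<noteq> 0}"
    moreover obtain a c r where x: "x = (a, c, r)" by (cases x) auto
    ultimately have "0 \<le> a \<and> 0 \<le> c \<and> 0 \<le> r \<and> a + r + 2 * c \<le> 1" using Dn_nz by auto
    then have "(a, c, r) \<in> ?S" by auto
    then show "x \<in> ?S" using x by simp
  qed
  have v: "Dn k 1 (0, 0, 0) = k" "Dn k 1 (1, 0, 0) = 1" "Dn k 1 (0, 0, 1) = 1"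
    by (simp_all add: Dnat_def En_def frakp_div_def ifct_def qfact_def)
  have b: "Bb 1 1 (0, 0, 0) = Kinv" "Bb 1 1 (1, 0, 0) = e" "Bb 1 1 (0, 0, 1) = F"
    by (simp_all add: Bb_def hbr.simps Kp_m1)
  show ?thesis unfolding Lin_expand[OF _ sub, simplified] using v b by (simp add: sc_def ph1 add.commute add.left_commute)
qed

lemma main_claim:
  assumes "1 \<le> m"
  shows "tdot \<phi> (F + e + \<phi> k * Kinv) (2 * m - 1) = Lin (Bb (2 - int m) (2 * int m - 1)) (Dn k (2 * int m - 1))
       \<and> tdot \<phi> (F + e + \<phi> k * Kinv) (2 * m) = Lin (Bb (2 - int m) (2 * int m)) (Dn k (2 * int m))"
  using assms
proof (induction m rule: nat_induct_at_least)
  case base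
  have h: "tdot \<phi> (F + e + \<phi> k * Kinv) (2 * 1 - 1) = Lin (Bb (2 - int 1) (2 * int 1 - 1)) (Dn k (2 * int 1 - 1))"
    using base_case tdot_1 by simp
  then show ?case using step_even[OF order_refl h] by simp
next
  case (Suc m)
  then have h1: "tdot \<phi> (F + e + \<phi> k * Kinv) (2 * m - 1) = Lin (Bb (2 - int m) (2 * int m - 1)) (Dn k (2 * int m - 1))"
    and h2: "tdot \<phi> (F + e + \<phi> k * Kinv) (2 * m) = Lin (Bb (2 - int m) (2 * int m)) (Dn k (2 * int m))" by auto
  have o: "tdot \<phi> (F + e + \<phi> k * Kinv) (2 * m + 1) = Lin (Bb (1 - int m) (2 * int m + 1)) (Dn k (2 * int m + 1))"
    by (rule step_odd[OF Suc.hyps h1 h2])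
  have o': "tdot \<phi> (F + e + \<phi> k * Kinv) (2 * Suc m - 1) = Lin (Bb (2 - int (Suc m)) (2 * int (Suc m) - 1)) (Dn k (2 * int (Suc m) - 1))"
  proof -
    have eqs: "2 * Suc m - 1 = 2 * m + 1" "2 - int (Suc m) = 1 - int m" "2 * int (Suc m) - 1 = 2 * int m + 1" by simp_all
    show ?thesis unfolding eqs by (rule o)
  qed
  show ?case using o' step_even[OF _ o'] by simp
qed

lemma sum_conv:
  assumes "n \<le> 2 * m"
  shows "(\<Sum>b\<in>{0..n}. \<Sum>a\<in>{0..b}. \<Sum>c\<in>{0..m}. sc (Dn k (int n) (int a, int c, int (b - a))) (B (int a, int c, int (b - a))))
       = Lin B (Dn k (int n))"
proof -
  let ?T = "SIGMA b:{0..n}. SIGMA a:{0..b}. {0..m}"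
  let ?h = "\<lambda>(b, a, c). (int a, int c, int (b - a))"
  have inj: "inj_on ?h ?T" by (auto simp: inj_on_def)
  have fin: "finite (?h ` ?T)" by auto
  have sub: "{x. Dn k (int n) x \<noteq> 0} \<subseteq> ?h ` ?T"
  proof
    fix x assume "x \<in> {x. Dn k (int n) x \<noteq> 0}"
    moreover obtain a c r where x: "x = (a, c, r)" by (cases x) auto
    ultimately have h: "0 \<le> a \<and> 0 \<le> c \<and> 0 \<le> r \<and> a + r + 2 * c \<le> int n" using Dn_nz by auto
    let ?y = "(nat (a + r), nat a, nat c)"
    have "?y \<in> ?T" using h assms by auto
    moreover have "nat (a + r) - nat a = nat r" using h by (simp add: nat_add_distrib)
    then have "?h ?y = x" using h x by simp
    ultimately show "x \<in> ?h ` ?T" by force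
  qed
  have "Lin B (Dn k (int n)) = (\<Sum>x\<in>?h ` ?T. sc (Dn k (int n) x) (B x))"
    by (rule Lin_expand[OF fin sub])
  also have "\<dots> = (\<Sum>y\<in>?T. sc (Dn k (int n) (?h y)) (B (?h y)))"
    by (subst sum.reindex[OF inj]) (simp add: comp_def)
  also have "\<dots> = (\<Sum>(b, ac)\<in>?T. case ac of (a, c) \<Rightarrow> sc (Dn k (int n) (int a, int c, int (b - a))) (B (int a, int c, int (b - a))))"
    by (rule sum.cong) auto
  also have "\<dots> = (\<Sum>b\<in>{0..n}. \<Sum>(a, c)\<in>{0..b} \<times> {0..m}. sc (Dn k (int n) (int a, int c, int (b - a))) (B (int a, int c, int (b - a))))"
    by (rule sum.Sigma[symmetric]) auto
  also have "\<dots> = (\<Sum>b\<in>{0..n}. \<Sum>a\<in>{0..b}. \<Sum>c\<in>{0..m}. sc (Dn k (int n) (int a, int c, int (b - a))) (B (int a, int c, int (b - a))))"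
    by (simp only: sum.cartesian_product)
  finally show ?thesis by simp
qed


lemma summand:
  assumes "a \<le> b"
  shows "\<phi> (qv powi EE * frakp_div JJ k) * dpow \<phi> e a * hbr \<phi> Kinv al c * Kp SS * dpow \<phi> F (b - a)
    = sc (qv powi EE * frakp_div JJ k * (1 / qfact a) * (1 / qfact (b - a))) (e ^ a * hbr \<phi> Kinv al c * Kp SS * F ^ (b - a))"
  unfolding dpow_def by (simp add: sc_def[symmetric] mult.assoc mult_ac)

lemma Dn_val:
  assumes "a \<le> b"
  shows "Dn k n (int a, int c, int (b - a)) = qv powi (En n (int a) (int c) (int (b - a))) * frakp_div (n - int a - int (b - a) - 2 * int c) k * (1 / qfact a) * (1 / qfact (b - a))"
  by (simp add: Dnat_def ifct_def)

lemma Bb_val: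
  assumes "a \<le> b"
  shows "Bb al N (int a, int c, int (b - a)) = e ^ a * hbr \<phi> Kinv al c * Kp (int b - N + 2 * int c) * F ^ (b - a)"
proof -
  have h: "nat (int b - int a) = b - a" by simp
  show ?thesis using assms by (simp add: Bb_def h)
qed

end

theorem theorem5p2:
  fixes \<phi> :: "Qq \<Rightarrow> 'a::ring_1" and E F K Kinv :: 'a and l :: int and \<kappa> :: Qq and t :: 'a and m :: nat
  assumes U: "U_rep \<phi> E F K Kinv"
    and kappa: "\<kappa> = qint (2 * l - 1)"
    and t: "t = F + Echk \<phi> E Kinv + \<phi> \<kappa> * Kinv"
    and m: "1 \<le> m"
  shows "tdot \<phi> t (2 * m) =
      (\<Sum>b\<in>{0..2*m}. \<Sum>a\<in>{0..b}. \<Sum>c\<in>{0..m}.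
        \<phi> (qv powi (int ((2 * c) choose 2) - 2 * int c
               - int b * (2 * int m - int b - 2 * int c) - int a * (int b - int a))
             * frakp_div (2 * int m - int b - 2 * int c) \<kappa>)
        * dpow \<phi> (Echk \<phi> E Kinv) a * hbr \<phi> Kinv (2 - int m) c
        * Kpow K Kinv (int b - 2 * int m + 2 * int c) * dpow \<phi> F (b - a))
    \<and> tdot \<phi> t (2 * m - 1) =
      (\<Sum>b\<in>{0..2*m-1}. \<Sum>a\<in>{0..b}. \<Sum>c\<in>{0..m}.
        \<phi> (qv powi (int ((2 * c) choose 2)
               - int b * (2 * int m - int b - 2 * int c - 1) - int a * (int b - int a))
             * frakp_div (2 * int m - int b - 2 * int c - 1) \<kappa>)
        * dpow \<phi> (Echk \<phi> E Kinv) a * hbr \<phi> Kinv (2 - int m) c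
        * Kpow K Kinv (int b - 2 * int m + 2 * int c + 1) * dpow \<phi> F (b - a))"
proof -
  interpret urep \<phi> E F K Kinv by (rule urep.intro[OF U])
  have tt: "t = F + Echk \<phi> E Kinv + \<phi> \<kappa> * Kinv" by (rule t)
  have mc: "tdot \<phi> t (2 * m - 1) = Lin (Bb (2 - int m) (2 * int m - 1)) (Dn \<kappa> (2 * int m - 1))"
       "tdot \<phi> t (2 * m) = Lin (Bb (2 - int m) (2 * int m)) (Dn \<kappa> (2 * int m))"
    using main_claim[OF m, of \<kappa>] unfolding tt by auto
  have i1: "int (2 * m) = 2 * int m" by simp
  have i2: "int (2 * m - 1) = 2 * int m - 1" using m by simp
  have sc1: "Lin (Bb (2 - int m) (2 * int m)) (Dn \<kappa> (2 * int m))
     = (\<Sum>b\<in>{0..2*m}. \<Sum>a\<in>{0..b}. \<Sum>c\<in>{0..m}. sc (Dn \<kappa> (2 * int m) (int a, int c, int (b - a))) (Bb (2 - int m) (2 * int m) (int a, int c, int (b - a))))"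
    using sum_conv[of "2 * m" m \<kappa> "Bb (2 - int m) (2 * int m)"] unfolding i1 by simp
  have sc2: "Lin (Bb (2 - int m) (2 * int m - 1)) (Dn \<kappa> (2 * int m - 1))
     = (\<Sum>b\<in>{0..2*m-1}. \<Sum>a\<in>{0..b}. \<Sum>c\<in>{0..m}. sc (Dn \<kappa> (2 * int m - 1) (int a, int c, int (b - a))) (Bb (2 - int m) (2 * int m - 1) (int a, int c, int (b - a))))"
    using sum_conv[of "2 * m - 1" m \<kappa> "Bb (2 - int m) (2 * int m - 1)"] unfolding i2 by simp
  have se1: "\<phi> (qv powi (int ((2 * c) choose 2) - 2 * int c
               - int b * (2 * int m - int b - 2 * int c) - int a * (int b - int a))
             * frakp_div (2 * int m - int b - 2 * int c) \<kappa>)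
        * dpow \<phi> (Echk \<phi> E Kinv) a * hbr \<phi> Kinv (2 - int m) c
        * Kpow K Kinv (int b - 2 * int m + 2 * int c) * dpow \<phi> F (b - a)
      = sc (Dn \<kappa> (2 * int m) (int a, int c, int (b - a))) (Bb (2 - int m) (2 * int m) (int a, int c, int (b - a)))"
    if ab: "a \<le> b" for a b c
  proof -
    have ee: "En (2 * int m) (int a) (int c) (int (b - a)) = int ((2 * c) choose 2) - 2 * int c
               - int b * (2 * int m - int b - 2 * int c) - int a * (int b - int a)"
      using ab unfolding choose2c by (simp add: En_def of_nat_diff algebra_simps)
    have jj: "2 * int m - int a - int (b - a) - 2 * int c = 2 * int m - int b - 2 * int c"
      using ab by (simp add: of_nat_diff)
    show ?thesis unfolding summand[OF ab] Dn_val[OF ab] Bb_val[OF ab] ee jj ..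
  qed
  have se2: "\<phi> (qv powi (int ((2 * c) choose 2)
               - int b * (2 * int m - int b - 2 * int c - 1) - int a * (int b - int a))
             * frakp_div (2 * int m - int b - 2 * int c - 1) \<kappa>)
        * dpow \<phi> (Echk \<phi> E Kinv) a * hbr \<phi> Kinv (2 - int m) c
        * Kpow K Kinv (int b - 2 * int m + 2 * int c + 1) * dpow \<phi> F (b - a)
      = sc (Dn \<kappa> (2 * int m - 1) (int a, int c, int (b - a))) (Bb (2 - int m) (2 * int m - 1) (int a, int c, int (b - a)))"
    if ab: "a \<le> b" for a b c
  proof -
    have ee: "En (2 * int m - 1) (int a) (int c) (int (b - a)) = int ((2 * c) choose 2)
               - int b * (2 * int m - int b - 2 * int c - 1) - int a * (int b - int a)"
      using ab unfolding choose2c by (simp add: En_def of_nat_diff algebra_simps)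
    have jj: "2 * int m - 1 - int a - int (b - a) - 2 * int c = 2 * int m - int b - 2 * int c - 1"
      using ab by (simp add: of_nat_diff)
    have kk: "int b - (2 * int m - 1) + 2 * int c = int b - 2 * int m + 2 * int c + 1" by simp
    show ?thesis unfolding summand[OF ab] Dn_val[OF ab] Bb_val[OF ab] ee jj kk ..
  qed
  show ?thesis
    apply (rule conjI)
    subgoal unfolding mc(2) sc1 by (intro sum.cong refl) (simp add: se1)
    subgoal unfolding mc(1) sc2 by (intro sum.cong refl) (simp add: se2)
    done
qed

end
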